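(* Consider an arbitrary sequence of instances $\{\mathcal{I}_N\}$ of the binary voting game and an arbitrary sequence of regular strategy profiles $\{\Sigma_N\}_{N\ge1}$, and let $f^N$ be the excess expected vote share of $\Sigma_N$. (i) If $\liminf_{N\to\infty}\sqrt N f^N=+\infty$, then there is a sequence $\varepsilon_N\to0$ such that for every $N$, $\Sigma_N$ is an $\varepsilon_N$-strong Bayes Nash Equilibrium. (ii) If $\liminf_{N\to\infty}\sqrt N f^N<0$ (including $-\infty$), then there are a constant $\varepsilon>0$ and infinitely many $N$ such that $\Sigma_N$ is not an $\varepsilon$-strong Bayes Nash Equilibrium. (iii) If $0\le\liminf_{N\to\infty}\sqrt N f^N<+\infty$ and there is a constant $\psi>0$ such that $\mathrm{Var}(\sum_{n=1}^N X_n^N\mid W=w)\ge\psi N$ for every $N$ and every $w\in\{L,H\}$, then there are a constant $\varepsilon>0$ and infinitely many $N$ such that $\Sigma_N$ is not an $\varepsilon$-strong Bayes Nash Equilibrium.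
   Context: Binary voting game. An instance has $N$ agents each voting for $\mathbf{A}$ or $\mathbf{R}$. Unobserved world state $W\in\{L,H\}$ with common prior $P_L,P_H>0$. Conditional on $W$, each agent independently receives a signal $S_n\in\{l,h\}$ with $P_{sw}=\Pr[S_n=s\mid W=w]$, $P_{hH}>P_{hL}$, $P_{lH}<P_{lL}$. With threshold $\mu\in(0,1)$, $\mathbf{A}$ wins iff at least $\mu N$ agents vote $\mathbf{A}$, else $\mathbf{R}$. Agent $n$ has utility $v_n:\{L,H\}\times\{\mathbf{A},\mathbf{R}\}\to\{0,\dots,B\}$ ($B$ fixed) with $v_n(H,\mathbf{A})>v_n(L,\mathbf{A})$, $v_n(H,\mathbf{R})<v_n(L,\mathbf{R})$. Every agent is friendly ($v_n(H,\mathbf{A})>v_n(L,\mathbf{A})>v_n(L,\mathbf{R})>v_n(H,\mathbf{R})$), unfriendly ($v_n(L,\mathbf{R})>v_n(H,\mathbf{R})>v_n(H,\mathbf{A})>v_n(L,\mathbf{A})$) or contingent ($v_n(H,\mathbf{A})>v_n(H,\mathbf{R})$, $v_n(L,\mathbf{R})>v_n(L,\mathbf{A})$); counts $\lfloor\alpha_F N\rfloor$, $\lfloor\alpha_U N\rfloor$, rest, for fixed $\alpha_F,\alpha_U,\alpha_C\ge0$ summing to 1 with $\alpha_F<\mu$, $\alpha_U<1-\mu$ (so the informed majority decision is $\mathbf{A}$ in $H$, $\mathbf{R}$ in $L$). A sequence of instances $\{\mathcal{I}_N\}$: $\mathcal{I}_N$ has $N$ agents; all share $\mu$, prior, signal distribution,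 $\alpha$'s; utilities arbitrary. Strategy $\sigma=(\beta_l,\beta_h)$, $\beta_s$ = probability of voting $\mathbf{A}$ on signal $s$. Regular profile: friendly agents always vote $\mathbf{A}$, unfriendly agents always vote $\mathbf{R}$. $\lambda^{\mathbf{X}}_w(\Sigma)$: ex-ante probability that $\mathbf{X}$ wins in state $w$. Expected utility $u_n(\Sigma)=\sum_w P_w(\lambda^{\mathbf{A}}_w(\Sigma)v_n(w,\mathbf{A})+\lambda^{\mathbf{R}}_w(\Sigma)v_n(w,\mathbf{R}))$. $\Sigma$ is an $\varepsilon$-strong Bayes Nash Equilibrium if there is no set $D$ of agents and profile $\Sigma'$ with $\sigma'_n=\sigma_n$ for $n\notin D$, $u_n(\Sigma')\ge u_n(\Sigma)$ for all $n\in D$ and $u_n(\Sigma')>u_n(\Sigma)+\varepsilon$ for some $n\in D$. For $\Sigma_N$, $X_n^N=1$ if agent $n$ votes $\mathbf{A}$ and $0$ otherwise; $f^N_H=\frac1N\sum_n E[X_n^N\mid W=H]-\mu$, $f^N_L=\frac1N\sum_n E[1-X_n^N\mid W=L]-(1-\mu)$, $f^N=\min(f^N_H,f^N_L)$. *)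

theory Defs
  imports "HOL-Analysis.Analysis"
begin

datatype wstate = Lo | Hi
datatype outcome = Acc | Rej

text \<open>A strategy is a pair (beta_l, beta_h): probabilities of voting A on signal l, resp. h.\<close>
type_synonym strategy = "real \<times> real"

definition valid_strategy :: "strategy \<Rightarrow> bool" where
  "valid_strategy \<sigma> \<longleftrightarrow> 0 \<le> fst \<sigma> \<and> fst \<sigma> \<le> 1 \<and> 0 \<le> snd \<sigma> \<and> snd \<sigma> \<le> 1"

text \<open>Ph w = Pr[S_n = h | W = w]; hence Pr[S_n = l | W = w] = 1 - Ph w.
  Probability that an agent playing sigma votes A in state w.\<close>
definition voteA_prob :: "(wstate \<Rightarrow> real) \<Rightarrow> wstate \<Rightarrow> strategy \<Rightarrow> real" where
  "voteA_prob Ph w \<sigma> = (1 - Ph w) * fst \<sigma> + Ph w * snd \<sigma>"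

definition set_weight :: "(nat \<Rightarrow> real) \<Rightarrow> nat \<Rightarrow> nat set \<Rightarrow> real" where
  "set_weight p N S = (\<Prod>n\<in>S. p n) * (\<Prod>n\<in>{..<N} - S. 1 - p n)"

definition winA :: "real \<Rightarrow> (wstate \<Rightarrow> real) \<Rightarrow> nat \<Rightarrow> (nat \<Rightarrow> strategy) \<Rightarrow> wstate \<Rightarrow> real" where
  "winA \<mu> Ph N \<Sigma> w =
     (\<Sum>S | S \<subseteq> {..<N} \<and> real (card S) \<ge> \<mu> * real N. set_weight (\<lambda>n. voteA_prob Ph w (\<Sigma> n)) N S)"

definition winR :: "real \<Rightarrow> (wstate \<Rightarrow> real) \<Rightarrow> nat \<Rightarrow> (nat \<Rightarrow> strategy) \<Rightarrow> wstate \<Rightarrow> real" where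
  "winR \<mu> Ph N \<Sigma> w =
     (\<Sum>S | S \<subseteq> {..<N} \<and> real (card S) < \<mu> * real N. set_weight (\<lambda>n. voteA_prob Ph w (\<Sigma> n)) N S)"

definition exp_util :: "(wstate \<Rightarrow> real) \<Rightarrow> (wstate \<Rightarrow> real) \<Rightarrow> real \<Rightarrow> nat \<Rightarrow> (nat \<Rightarrow> strategy)
    \<Rightarrow> (wstate \<Rightarrow> outcome \<Rightarrow> nat) \<Rightarrow> real" where
  "exp_util prior Ph \<mu> N \<Sigma> u =
     (\<Sum>w\<in>{Lo, Hi}. prior w * (winA \<mu> Ph N \<Sigma> w * real (u w Acc) + winR \<mu> Ph N \<Sigma> w * real (u w Rej)))"

definition strong_BNE :: "(wstate \<Rightarrow> real) \<Rightarrow> (wstate \<Rightarrow> real) \<Rightarrow> real \<Rightarrow> nat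
    \<Rightarrow> (nat \<Rightarrow> wstate \<Rightarrow> outcome \<Rightarrow> nat) \<Rightarrow> (nat \<Rightarrow> strategy) \<Rightarrow> real \<Rightarrow> bool" where
  "strong_BNE prior Ph \<mu> N v \<Sigma> \<epsilon> \<longleftrightarrow>
     \<not> (\<exists>D \<Sigma>'. D \<subseteq> {..<N} \<and> (\<forall>n<N. valid_strategy (\<Sigma>' n)) \<and>
            (\<forall>n<N. n \<notin> D \<longrightarrow> \<Sigma>' n = \<Sigma> n) \<and>
            (\<forall>n\<in>D. exp_util prior Ph \<mu> N \<Sigma>' (v n) \<ge> exp_util prior Ph \<mu> N \<Sigma> (v n)) \<and>
            (\<exists>n\<in>D. exp_util prior Ph \<mu> N \<Sigma>' (v n) > exp_util prior Ph \<mu> N \<Sigma> (v n) + \<epsilon>))"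

definition friendly :: "(wstate \<Rightarrow> outcome \<Rightarrow> nat) \<Rightarrow> bool" where
  "friendly u \<longleftrightarrow> u Hi Acc > u Lo Acc \<and> u Lo Acc > u Lo Rej \<and> u Lo Rej > u Hi Rej"

definition unfriendly :: "(wstate \<Rightarrow> outcome \<Rightarrow> nat) \<Rightarrow> bool" where
  "unfriendly u \<longleftrightarrow> u Lo Rej > u Hi Rej \<and> u Hi Rej > u Hi Acc \<and> u Hi Acc > u Lo Acc"

definition contingent :: "(wstate \<Rightarrow> outcome \<Rightarrow> nat) \<Rightarrow> bool" where
  "contingent u \<longleftrightarrow> u Hi Acc > u Hi Rej \<and> u Lo Rej > u Lo Acc"

definition regular :: "nat \<Rightarrow> (nat \<Rightarrow> wstate \<Rightarrow> outcome \<Rightarrow> nat) \<Rightarrow> (nat \<Rightarrow> strategy) \<Rightarrow> bool" where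
  "regular N v \<Sigma> \<longleftrightarrow> (\<forall>n<N. valid_strategy (\<Sigma> n) \<and>
      (friendly (v n) \<longrightarrow> \<Sigma> n = (1, 1)) \<and> (unfriendly (v n) \<longrightarrow> \<Sigma> n = (0, 0)))"

definition excess :: "(wstate \<Rightarrow> real) \<Rightarrow> real \<Rightarrow> nat \<Rightarrow> (nat \<Rightarrow> strategy) \<Rightarrow> real" where
  "excess Ph \<mu> N \<Sigma> =
     min ((\<Sum>n<N. voteA_prob Ph Hi (\<Sigma> n)) / real N - \<mu>)
         ((\<Sum>n<N. 1 - voteA_prob Ph Lo (\<Sigma> n)) / real N - (1 - \<mu>))"

definition var_votes :: "(wstate \<Rightarrow> real) \<Rightarrow> nat \<Rightarrow> (nat \<Rightarrow> strategy) \<Rightarrow> wstate \<Rightarrow> real" where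
  "var_votes Ph N \<Sigma> w =
     (let p = (\<lambda>n. voteA_prob Ph w (\<Sigma> n));
          m = (\<Sum>S\<in>Pow {..<N}. set_weight p N S * real (card S))
      in (\<Sum>S\<in>Pow {..<N}. set_weight p N S * (real (card S) - m)^2))"

end

theory Submission
  imports Defs
begin


definition sw :: "(nat \<Rightarrow> real) \<Rightarrow> nat set \<Rightarrow> nat set \<Rightarrow> real" where
  "sw p I S = (\<Prod>n\<in>S. p n) * (\<Prod>n\<in>I - S. 1 - p n)"

definition EE :: "(nat \<Rightarrow> real) \<Rightarrow> nat set \<Rightarrow> (nat set \<Rightarrow> real) \<Rightarrow> real" where
  "EE p I g = (\<Sum>S\<in>Pow I. sw p I S * g S)"

lemma EE_empty[simp]: "EE p {} g = g {}"
  by (simp add: EE_def sw_def)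

lemma EE_insert:
  assumes "finite I" "j \<notin> I"
  shows "EE p (insert j I) g = EE p I (\<lambda>S. p j * g (insert j S) + (1 - p j) * g S)"
proof -
  have inj: "inj_on (insert j) (Pow I)"
    using assms(2) by (auto simp: inj_on_def)
  have disj: "Pow I \<inter> insert j ` Pow I = {}" using assms(2) by auto
  have fin: "finite (Pow I)" using assms(1) by simp
  have s1: "sw p (insert j I) S = (1 - p j) * sw p I S" if "S \<subseteq> I" for S
  proof -
    have "insert j I - S = insert j (I - S)" using that assms(2) by auto
    moreover have "finite (I - S)" using assms(1) by simp
    ultimately show ?thesis using assms(2) by (simp add: sw_def)
  qed
  have s2: "sw p (insert j I) (insert j S) = p j * sw p I S" if "S \<subseteq> I" for S
  proof -
    have "insert j I - insert j S = I - S" using that assms(2) by auto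
    moreover have "finite S" using assms(1) that finite_subset by blast
    moreover have "j \<notin> S" using that assms(2) by auto
    ultimately show ?thesis by (simp add: sw_def)
  qed
  have "EE p (insert j I) g = (\<Sum>S\<in>Pow I. sw p (insert j I) S * g S)
        + (\<Sum>S\<in>insert j ` Pow I. sw p (insert j I) S * g S)"
    unfolding EE_def Pow_insert using fin disj by (simp add: sum.union_disjoint)
  also have "(\<Sum>S\<in>insert j ` Pow I. sw p (insert j I) S * g S)
      = (\<Sum>S\<in>Pow I. sw p (insert j I) (insert j S) * g (insert j S))"
    using inj by (simp add: sum.reindex)
  also have "\<dots> = (\<Sum>S\<in>Pow I. p j * sw p I S * g (insert j S))"
    by (rule sum.cong) (auto simp: s2)
  also have "(\<Sum>S\<in>Pow I. sw p (insert j I) S * g S) = (\<Sum>S\<in>Pow I. (1 - p j) * sw p I S * g S)"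
    by (rule sum.cong) (auto simp: s1)
  finally show ?thesis unfolding EE_def
    by (simp add: sum.distrib[symmetric] algebra_simps)
qed

lemma EE_add: "EE p I (\<lambda>S. f S + g S) = EE p I f + EE p I g"
  by (simp add: EE_def algebra_simps sum.distrib)

lemma EE_diff: "EE p I (\<lambda>S. f S - g S) = EE p I f - EE p I g"
  by (simp add: EE_def algebra_simps sum_subtractf)

lemma EE_cmult: "EE p I (\<lambda>S. c * f S) = c * EE p I f"
  by (simp add: EE_def algebra_simps sum_distrib_left)

lemma EE_cong: "(\<And>S. S \<subseteq> I \<Longrightarrow> f S = g S) \<Longrightarrow> EE p I f = EE p I g"
  by (auto simp: EE_def intro!: sum.cong)

lemma EE_const: "finite I \<Longrightarrow> EE p I (\<lambda>_. c) = c"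
proof (induction I rule: finite_induct)
  case empty then show ?case by simp
next
  case (insert j I) then show ?case by (simp add: EE_insert algebra_simps)
qed

definition pr01 :: "(nat \<Rightarrow> real) \<Rightarrow> nat set \<Rightarrow> bool" where
  "pr01 p I \<longleftrightarrow> (\<forall>i\<in>I. 0 \<le> p i \<and> p i \<le> 1)"

lemma sw_nonneg: "pr01 p I \<Longrightarrow> S \<subseteq> I \<Longrightarrow> sw p I S \<ge> 0"
  unfolding sw_def pr01_def
  by (intro mult_nonneg_nonneg prod_nonneg) auto

lemma EE_mono: "pr01 p I \<Longrightarrow> (\<And>S. S \<subseteq> I \<Longrightarrow> f S \<le> g S) \<Longrightarrow> EE p I f \<le> EE p I g"
  unfolding EE_def by (intro sum_mono mult_left_mono) (auto simp: sw_nonneg)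

lemma EE_nonneg: "pr01 p I \<Longrightarrow> (\<And>S. S \<subseteq> I \<Longrightarrow> 0 \<le> f S) \<Longrightarrow> 0 \<le> EE p I f"
  using EE_mono[of p I "\<lambda>_. 0" f] by (simp add: EE_def)

lemma EE_insert_card:
  assumes "finite I" "j \<notin> I"
  shows "EE p (insert j I) (\<lambda>S. h (real (card S))) =
         EE p I (\<lambda>S. p j * h (real (card S) + 1) + (1 - p j) * h (real (card S)))"
proof -
  have "card (insert j S) = card S + 1" if "S \<subseteq> I" for S
    using that assms finite_subset by (subst card_insert_disjoint) auto
  then show ?thesis unfolding EE_insert[OF assms] by (intro EE_cong) (simp add: add.commute)
qed

lemma EE_mean: "finite I \<Longrightarrow> EE p I (\<lambda>S. real (card S)) = (\<Sum>i\<in>I. p i)"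
proof (induction I rule: finite_induct)
  case empty then show ?case by simp
next
  case (insert j I)
  have "EE p (insert j I) (\<lambda>S. real (card S)) = EE p I (\<lambda>S. real (card S) + p j)"
    using EE_insert_card[OF insert(1,2), of p "\<lambda>x. x"] by (simp add: algebra_simps)
  then show ?case using insert by (simp add: EE_add EE_const)
qed

lemma EE_centered: "finite I \<Longrightarrow> EE p I (\<lambda>S. real (card S) - (\<Sum>i\<in>I. p i)) = 0"
  by (simp add: EE_diff EE_mean EE_const)

lemma EE_var: "finite I \<Longrightarrow>
  EE p I (\<lambda>S. (real (card S) - (\<Sum>i\<in>I. p i))^2) = (\<Sum>i\<in>I. p i * (1 - p i))"
proof (induction I rule: finite_induct)
  case empty then show ?case by simp
next
  case (insert j I)
  define m where "m = (\<Sum>i\<in>I. p i)"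
  have "EE p (insert j I) (\<lambda>S. (real (card S) - (\<Sum>i\<in>insert j I. p i))^2)
      = EE p (insert j I) (\<lambda>S. (\<lambda>x. (x - (m + p j))^2) (real (card S)))"
    using insert by (simp add: m_def algebra_simps)
  also have "\<dots> = EE p I (\<lambda>S. p j * (real (card S) + 1 - (m + p j))^2 + (1 - p j) * (real (card S) - (m + p j))^2)"
    using EE_insert_card[OF insert(1,2), of p "\<lambda>x. (x - (m + p j))^2"] by simp
  also have "\<dots> = EE p I (\<lambda>S. (real (card S) - m)^2 + p j * (1 - p j))"
    by (intro EE_cong) (simp add: power2_eq_square algebra_simps)
  finally show ?case using insert by (simp add: EE_add EE_const m_def)
qed

lemma EE_fourth: "finite I \<Longrightarrow> pr01 p I \<Longrightarrow>
  EE p I (\<lambda>S. (real (card S) - (\<Sum>i\<in>I. p i))^4) \<le>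
    3 * (\<Sum>i\<in>I. p i * (1 - p i))^2 + (\<Sum>i\<in>I. p i * (1 - p i))"
proof (induction I rule: finite_induct)
  case empty then show ?case by simp
next
  case (insert j I)
  define m where "m = (\<Sum>i\<in>I. p i)"
  define v where "v = (\<Sum>i\<in>I. p i * (1 - p i))"
  define q where "q = 1 - p j"
  have pj: "0 \<le> p j" "p j \<le> 1" using insert(4) by (auto simp: pr01_def)
  have pI: "pr01 p I" using insert(4) by (auto simp: pr01_def)
  have "EE p (insert j I) (\<lambda>S. (real (card S) - (\<Sum>i\<in>insert j I. p i))^4)
      = EE p (insert j I) (\<lambda>S. (\<lambda>x. (x - (m + p j))^4) (real (card S)))"
    using insert by (simp add: m_def algebra_simps)
  also have "\<dots> = EE p I (\<lambda>S. (real (card S) - m)^4 + 6 * (p j * q) * (real (card S) - m)^2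
       + (4 * p j * q * (q - p j)) * (real (card S) - m) + p j * q * (p j ^ 3 + q ^ 3))"
    unfolding EE_insert_card[OF insert(1,2), of p "\<lambda>x. (x - (m + p j))^4"]
    by (intro EE_cong) (simp only: q_def power4_eq_xxxx power3_eq_cube power2_eq_square, algebra)
  also have "\<dots> = EE p I (\<lambda>S. (real (card S) - m)^4) + 6 * (p j * q) * v + p j * q * (p j ^ 3 + q ^ 3)"
    using insert(1) by (simp add: EE_add EE_cmult EE_const EE_var EE_centered m_def v_def)
  also have "\<dots> \<le> (3 * v^2 + v) + 6 * (p j * q) * v + p j * q"
  proof -
    have "p j ^ 3 + q ^ 3 \<le> 1"
    proof -
      have "p j ^ 3 \<le> p j" using power_decreasing[of 1 3 "p j"] pj by simp
      moreover have "q ^ 3 \<le> q" using power_decreasing[of 1 3 q] pj by (simp add: q_def)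
      ultimately show ?thesis by (simp add: q_def)
    qed
    moreover have "0 \<le> p j * q" using pj by (simp add: q_def)
    ultimately have "p j * q * (p j ^ 3 + q ^ 3) \<le> p j * q"
      by (simp add: mult_left_le)
    then show ?thesis using insert.IH[OF pI] by (simp add: m_def v_def)
  qed
  also have "\<dots> \<le> 3 * (v + p j * q)^2 + (v + p j * q)"
  proof -
    have "0 \<le> (p j * q) * (p j * q)" by simp
    then show ?thesis by (simp add: power2_eq_square algebra_simps)
  qed
  finally show ?case using insert by (simp add: v_def q_def add.commute)
qed



lemma EE_split:
  assumes "finite J" "finite K" "J \<inter> K = {}"
  shows "EE p (J \<union> K) (\<lambda>S. f (S \<inter> J) * g (S \<inter> K)) = EE p J f * EE p K g"
  using assms(2,3)
proof (induction K arbitrary: g rule: finite_induct)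
  case empty
  have "EE p J (\<lambda>S. f (S \<inter> J) * g {}) = EE p J (\<lambda>S. g {} * f S)"
    by (intro EE_cong) (auto simp: Int_absorb2)
  then show ?case using assms(1) by (simp add: EE_cmult)
next
  case (insert k K)
  have kJ: "k \<notin> J \<union> K" using insert by auto
  have JK: "J \<inter> K = {}" using insert by auto
  define g' where "g' T = p k * g (insert k T) + (1 - p k) * g T" for T
  have "EE p (J \<union> insert k K) (\<lambda>S. f (S \<inter> J) * g (S \<inter> insert k K))
      = EE p (insert k (J \<union> K)) (\<lambda>S. f (S \<inter> J) * g (S \<inter> insert k K))" by simp
  also have "\<dots> = EE p (J \<union> K) (\<lambda>S. p k * (f (insert k S \<inter> J) * g (insert k S \<inter> insert k K))
        + (1 - p k) * (f (S \<inter> J) * g (S \<inter> insert k K)))"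
    using assms(1) insert(1) kJ by (simp add: EE_insert)
  also have "\<dots> = EE p (J \<union> K) (\<lambda>S. f (S \<inter> J) * g' (S \<inter> K))"
  proof (intro EE_cong)
    fix S assume S: "S \<subseteq> J \<union> K"
    have "insert k S \<inter> J = S \<inter> J" using insert kJ by auto
    moreover have "insert k S \<inter> insert k K = insert k (S \<inter> K)" by auto
    moreover have "S \<inter> insert k K = S \<inter> K" using S kJ by auto
    ultimately show "p k * (f (insert k S \<inter> J) * g (insert k S \<inter> insert k K))
        + (1 - p k) * (f (S \<inter> J) * g (S \<inter> insert k K)) = f (S \<inter> J) * g' (S \<inter> K)"
      by (simp add: g'_def algebra_simps)
  qed
  also have "\<dots> = EE p J f * EE p K g'" using insert.IH[OF JK] .
  also have "EE p K g' = EE p (insert k K) g" using insert(1,2) by (simp add: EE_insert g'_def[abs_def])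
  finally show ?case .
qed

lemma EE_mono_p:
  assumes "finite I" "\<forall>i\<in>I. 0 \<le> p i \<and> p i \<le> p' i \<and> p' i \<le> 1"
    "\<And>S T. S \<subseteq> T \<Longrightarrow> T \<subseteq> I \<Longrightarrow> g S \<le> g T"
  shows "EE p I g \<le> EE p' I g"
  using assms
proof (induction I arbitrary: g rule: finite_induct)
  case empty then show ?case by simp
next
  case (insert j I)
  define g1 where "g1 S = p' j * g (insert j S) + (1 - p' j) * g S" for S
  have pj: "0 \<le> p j" "p j \<le> p' j" "p' j \<le> 1" using insert(4) by auto
  have prI: "pr01 p I" "pr01 p' I" using insert(4) by (force simp: pr01_def)+
  have "EE p (insert j I) g = EE p I (\<lambda>S. p j * g (insert j S) + (1 - p j) * g S)"
    using insert by (simp add: EE_insert)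
  also have "\<dots> \<le> EE p I g1"
  proof (intro EE_mono[OF prI(1)])
    fix S assume S: "S \<subseteq> I"
    have "g S \<le> g (insert j S)" using insert(5)[of S "insert j S"] S by auto
    then have "0 \<le> (p' j - p j) * (g (insert j S) - g S)" using pj by simp
    then show "p j * g (insert j S) + (1 - p j) * g S \<le> g1 S"
      by (simp add: g1_def algebra_simps)
  qed
  also have "\<dots> \<le> EE p' I g1"
  proof (rule insert.IH)
    show "\<forall>i\<in>I. 0 \<le> p i \<and> p i \<le> p' i \<and> p' i \<le> 1" using insert(4) by auto
    fix S T assume ST: "S \<subseteq> T" "T \<subseteq> I"
    have "g S \<le> g T" "g (insert j S) \<le> g (insert j T)"
      using insert(5)[of S T] insert(5)[of "insert j S" "insert j T"] ST by auto
    then have "p' j * g (insert j S) \<le> p' j * g (insert j T)"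
      "(1 - p' j) * g S \<le> (1 - p' j) * g T"
      using pj by (auto intro: mult_left_mono)
    then show "g1 S \<le> g1 T" by (simp add: g1_def)
  qed
  also have "\<dots> = EE p' (insert j I) g" using insert by (simp add: EE_insert g1_def[abs_def])
  finally show ?case .
qed

definition msum :: "(nat \<Rightarrow> real) \<Rightarrow> nat set \<Rightarrow> real" where
  "msum p I = (\<Sum>i\<in>I. p i)"
definition vsum :: "(nat \<Rightarrow> real) \<Rightarrow> nat set \<Rightarrow> real" where
  "vsum p I = (\<Sum>i\<in>I. p i * (1 - p i))"

lemma vsum_nonneg: "pr01 p I \<Longrightarrow> 0 \<le> vsum p I"
  unfolding vsum_def pr01_def by (intro sum_nonneg) auto

lemma pq_le: "(x::real) * (1 - x) \<le> 1/4"
proof -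
  have "0 \<le> (x - 1/2)^2" by simp
  then show ?thesis by (simp add: power2_eq_square algebra_simps)
qed

lemma vsum_le: "vsum p I \<le> real (card I) / 4"
proof -
  have "vsum p I \<le> (\<Sum>i\<in>I. 1/4)" unfolding vsum_def by (intro sum_mono pq_le)
  then show ?thesis by simp
qed

lemma chebyshev:
  assumes "finite I" "pr01 p I" "a > 0"
  shows "EE p I (\<lambda>S. of_bool (a \<le> \<bar>real (card S) - msum p I\<bar>)) \<le> vsum p I / a^2"
proof -
  have "EE p I (\<lambda>S. of_bool (a \<le> \<bar>real (card S) - msum p I\<bar>))
      \<le> EE p I (\<lambda>S. (1 / a^2) * (real (card S) - msum p I)^2)"
  proof (intro EE_mono[OF assms(2)])
    fix S
    show "of_bool (a \<le> \<bar>real (card S) - msum p I\<bar>) \<le> 1 / a^2 * (real (card S) - msum p I)^2"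
    proof (cases "a \<le> \<bar>real (card S) - msum p I\<bar>")
      case True
      then have "a^2 \<le> \<bar>real (card S) - msum p I\<bar>^2" using assms(3) by (intro power_mono) auto
      then show ?thesis using True assms(3) by (simp add: field_simps)
    qed simp
  qed
  also have "\<dots> = vsum p I / a^2"
    unfolding EE_cmult using EE_var[OF assms(1)] by (simp add: msum_def vsum_def)
  finally show ?thesis .
qed

lemma tail_lemma:
  assumes "finite I" "pr01 p I" "EE p I Z = 0" "EE p I (\<lambda>S. (Z S)^2) \<le> v"
    "a > 0" "lam > 0" "\<And>S. S \<subseteq> I \<Longrightarrow> P S \<Longrightarrow> a \<le> Z S"
  shows "a * EE p I (\<lambda>S. of_bool (P S)) \<le> v / (2 * lam) + lam / 2 * (1 - EE p I (\<lambda>S. of_bool (P S)))"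
proof -
  have "EE p I (\<lambda>S. a * of_bool (P S)) \<le>
      EE p I (\<lambda>S. Z S + (1 / (2 * lam)) * (Z S)^2 + lam / 2 * (1 - of_bool (P S)))"
  proof (intro EE_mono[OF assms(2)])
    fix S assume S: "S \<subseteq> I"
    show "a * of_bool (P S) \<le> Z S + (1 / (2 * lam)) * (Z S)^2 + lam / 2 * (1 - of_bool (P S))"
    proof (cases "P S")
      case True
      then have "a \<le> Z S" using assms(7) S by auto
      moreover have "0 \<le> (1 / (2 * lam)) * (Z S)^2" using assms(6) by simp
      ultimately show ?thesis using True by simp
    next
      case False
      have "0 \<le> (Z S + lam)^2 / (2 * lam)" using assms(6) by simp
      also have "(Z S + lam)^2 / (2 * lam) = Z S + (1 / (2 * lam)) * (Z S)^2 + lam / 2"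
        using assms(6) by (simp add: power2_eq_square field_simps)
      finally show ?thesis using False by simp
    qed
  qed
  also have "\<dots> = EE p I Z + (1 / (2 * lam)) * EE p I (\<lambda>S. (Z S)^2)
      + lam / 2 * (1 - EE p I (\<lambda>S. of_bool (P S)))"
    by (simp only: EE_add EE_cmult EE_diff EE_const[OF assms(1)])
  also have "\<dots> \<le> v / (2 * lam) + lam / 2 * (1 - EE p I (\<lambda>S. of_bool (P S)))"
    using assms(3,4,6) by (simp add: divide_right_mono)
  finally show ?thesis by (simp add: EE_cmult)
qed



lemma pw_a:
  fixes z T :: real assumes "T > 0"
  shows "(z^2 - z^4 / T^2) / T \<le> \<bar>z\<bar>"
proof (cases "\<bar>z\<bar> \<le> T")
  case True
  have "z^2 = \<bar>z\<bar> * \<bar>z\<bar>" by (simp add: power2_eq_square)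
  also have "\<dots> \<le> \<bar>z\<bar> * T" using True by (intro mult_left_mono) auto
  finally have "z^2 / T \<le> \<bar>z\<bar>" using assms by (simp add: field_simps)
  moreover have "0 \<le> z^4 / T^2 / T" using assms by simp
  ultimately show ?thesis by (simp add: diff_divide_distrib)
next
  case False
  then have "T^2 \<le> z^2" using assms
    by (metis abs_ge_zero less_imp_le not_le power2_abs power_mono)
  then have "z^2 * T^2 \<le> z^2 * z^2" by (intro mult_left_mono) auto
  then have "z^2 \<le> z^4 / T^2" using assms by (simp add: field_simps power4_eq_xxxx power2_eq_square)
  then have "(z^2 - z^4 / T^2) / T \<le> 0" using assms by (simp add: divide_nonpos_pos)
  then show ?thesis by simp
qed

lemma pw_b:
  fixes z b lam :: real assumes "b > 0" "lam > 0"
  shows "(\<bar>z\<bar> + z) / 2 \<le> b + z^2 / (2 * lam) + lam / 2 * of_bool (b \<le> z)"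
proof (cases "b \<le> z")
  case True
  have "0 \<le> (z - lam)^2 / (2 * lam)" using assms by simp
  also have "(z - lam)^2 / (2 * lam) = z^2 / (2 * lam) + lam / 2 - z"
    using assms by (simp add: power2_eq_square field_simps)
  finally show ?thesis using True assms by simp
next
  case False
  have "0 \<le> z^2 / (2 * lam)" using assms by simp
  moreover have "(\<bar>z\<bar> + z) / 2 \<le> b" using False assms by (cases "z \<ge> 0") auto
  ultimately show ?thesis using False by simp
qed

lemma block_lemma:
  assumes "finite I" "pr01 p I" "vsum p I \<ge> 1" "s * s = 1"
  shows "EE p I (\<lambda>S. of_bool (sqrt (vsum p I) / 32 \<le> s * (real (card S) - msum p I))) \<ge> 3 / 4096"
proof -
  define V where "V = vsum p I"
  define r where "r = sqrt V"
  define Z where "Z S = s * (real (card (S::nat set)) - msum p I)" for S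
  define P where "P = EE p I (\<lambda>S. of_bool (r / 32 \<le> Z S))"
  have r: "r \<ge> 1" "r^2 = V" using assms(3) by (auto simp: r_def V_def)
  have EZ: "EE p I Z = 0"
    using EE_centered[OF assms(1)] EE_cmult[of p I s] by (simp add: Z_def[abs_def] msum_def)
  have s2: "s^2 = 1" using assms(4) by (simp add: power2_eq_square)
  have s4: "s^4 = 1" by (simp add: power4_eq_xxxx assms(4))
  have Z2: "(Z S)^2 = (real (card S) - msum p I)^2" for S
    by (simp add: Z_def power_mult_distrib s2)
  have Z4: "(Z S)^4 = (real (card S) - msum p I)^4" for S
    by (simp add: Z_def power_mult_distrib s4)
  have EZ2: "EE p I (\<lambda>S. (Z S)^2) = V"
    unfolding Z2 using EE_var[OF assms(1)] by (simp add: V_def vsum_def msum_def)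
  have EZ4: "EE p I (\<lambda>S. (Z S)^4) \<le> 4 * V^2"
  proof -
    have "EE p I (\<lambda>S. (Z S)^4) \<le> 3 * V^2 + V"
      unfolding Z4 using EE_fourth[OF assms(1,2)] by (simp add: V_def vsum_def msum_def)
    moreover have "V \<le> V^2" using assms(3) by (simp add: V_def power2_eq_square)
    ultimately show ?thesis by simp
  qed
  define T where "T = 8 * r"
  define b where "b = r / 32"
  define lam where "lam = 32 * r"
  have pos: "T > 0" "b > 0" "lam > 0" using r by (auto simp: T_def b_def lam_def)
  have "EE p I (\<lambda>S. (1 / (2 * T)) * (Z S)^2 - (1 / (2 * T * T^2)) * (Z S)^4 + (1/2) * Z S)
     \<le> EE p I (\<lambda>S. b + (1 / (2 * lam)) * (Z S)^2 + lam / 2 * of_bool (b \<le> Z S))"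
  proof (intro EE_mono[OF assms(2)])
    fix S
    have "(1 / (2 * T)) * (Z S)^2 - (1 / (2 * T * T^2)) * (Z S)^4 + (1/2) * Z S
        = ((Z S)^2 - (Z S)^4 / T^2) / T / 2 + Z S / 2"
      using pos by (simp add: field_simps)
    also have "\<dots> \<le> (\<bar>Z S\<bar> + Z S) / 2" using divide_right_mono[OF pw_a[OF pos(1), of "Z S"], of 2] by (simp add: add_divide_distrib)
    also have "\<dots> \<le> b + (Z S)^2 / (2 * lam) + lam / 2 * of_bool (b \<le> Z S)"
      by (rule pw_b[OF pos(2,3)])
    finally show "(1 / (2 * T)) * (Z S)^2 - (1 / (2 * T * T^2)) * (Z S)^4 + (1/2) * Z S
        \<le> b + (1 / (2 * lam)) * (Z S)^2 + lam / 2 * of_bool (b \<le> Z S)" by simp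
  qed
  then have main: "(1 / (2 * T)) * V - (1 / (2 * T * T^2)) * EE p I (\<lambda>S. (Z S)^4)
      \<le> b + (1 / (2 * lam)) * V + lam / 2 * P"
    by (simp only: EE_add EE_diff EE_cmult EE_const[OF assms(1)] EZ EZ2 P_def b_def)
  have "(1 / (2 * T * T^2)) * EE p I (\<lambda>S. (Z S)^4) \<le> (1 / (2 * T * T^2)) * (4 * V^2)"
    using EZ4 pos by (intro mult_left_mono) auto
  with main have "(1 / (2 * T)) * V - (1 / (2 * T * T^2)) * (4 * V^2)
      \<le> b + (1 / (2 * lam)) * V + lam / 2 * P" by linarith
  then have "15 * r / 256 - 4 * r / 256 - 8 * r / 256 \<le> 16 * r * P"
    using r(1) unfolding T_def b_def lam_def r(2)[symmetric]
    by (simp add: field_simps power2_eq_square)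
  then have "3 * r \<le> 4096 * r * P" by simp
  then have "3 / 4096 \<le> P" using r(1) by (simp add: field_simps)
  then show ?thesis by (simp add: P_def Z_def r_def V_def b_def)
qed



lemma pr01_subset: "pr01 p I \<Longrightarrow> J \<subseteq> I \<Longrightarrow> pr01 p J"
  unfolding pr01_def by auto

lemma of_bool_mono: "(A \<Longrightarrow> B) \<Longrightarrow> (of_bool A :: real) \<le> of_bool B"
  by (cases A) auto

lemma of_bool_mult_mono: "(A \<Longrightarrow> B \<Longrightarrow> C) \<Longrightarrow> (of_bool A :: real) * of_bool B \<le> of_bool C"
  by (cases A; cases B) auto

lemma split_exists:
  assumes "finite I" "pr01 p I" "0 \<le> x" "x \<le> vsum p I"
  shows "\<exists>J\<subseteq>I. x \<le> vsum p J \<and> vsum p J \<le> x + 1/4"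
  using assms
proof (induction I rule: finite_induct)
  case empty then show ?case by (auto simp: vsum_def)
next
  case (insert j I)
  have prI: "pr01 p I" using insert(4) by (auto simp: pr01_def)
  show ?case
  proof (cases "x \<le> vsum p I")
    case True
    then obtain J where "J \<subseteq> I" "x \<le> vsum p J" "vsum p J \<le> x + 1/4"
      using insert.IH[OF prI insert(5)] by blast
    then show ?thesis by blast
  next
    case False
    have "vsum p (insert j I) = p j * (1 - p j) + vsum p I" using insert(1,2) by (simp add: vsum_def)
    moreover have "p j * (1 - p j) \<le> 1/4" by (rule pq_le)
    ultimately have "vsum p (insert j I) \<le> x + 1/4" using False by linarith
    then show ?thesis using insert(6) by blast
  qed
qed

lemma vsum_split: "finite I \<Longrightarrow> J \<subseteq> I \<Longrightarrow> vsum p I = vsum p J + vsum p (I - J)"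
  unfolding vsum_def by (metis add.commute sum.subset_diff)

lemma msum_split: "finite I \<Longrightarrow> J \<subseteq> I \<Longrightarrow> msum p I = msum p J + msum p (I - J)"
  unfolding msum_def by (metis add.commute sum.subset_diff)

lemma blocks:
  assumes "finite I" "pr01 p I" "w \<ge> 1" "s * s = 1" "vsum p I \<ge> real (Suc m) * (w + 1/4)"
  shows "EE p I (\<lambda>S. of_bool (real (Suc m) * sqrt w / 32 \<le> s * (real (card S) - msum p I)))
          \<ge> (3/4096)^(Suc m)"
  using assms(1,2,5)
proof (induction m arbitrary: I)
  case 0
  have V: "vsum p I \<ge> w" using 0 by simp
  have "3/4096 \<le> EE p I (\<lambda>S. of_bool (sqrt (vsum p I) / 32 \<le> s * (real (card S) - msum p I)))"
    using block_lemma[OF 0(1,2) _ assms(4)] V assms(3) by simp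
  also have "\<dots> \<le> EE p I (\<lambda>S. of_bool (sqrt w / 32 \<le> s * (real (card S) - msum p I)))"
  proof (intro EE_mono[OF 0(2)])
    fix S
    have "sqrt w \<le> sqrt (vsum p I)" using V by simp
    then have imp: "sqrt (vsum p I) / 32 \<le> x \<Longrightarrow> sqrt w / 32 \<le> x" for x by linarith
    show "of_bool (sqrt (vsum p I) / 32 \<le> s * (real (card S) - msum p I))
        \<le> (of_bool (sqrt w / 32 \<le> s * (real (card S) - msum p I)) :: real)"
      by (rule of_bool_mono) (rule imp)
  qed
  finally show ?case by simp
next
  case (Suc m)
  have V: "vsum p I \<ge> real (Suc (Suc m)) * (w + 1/4)" by fact
  have "w \<le> real (Suc (Suc m)) * (w + 1/4)"
  proof -
    have "w \<le> 1 * (w + 1/4)" by simp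
    also have "\<dots> \<le> real (Suc (Suc m)) * (w + 1/4)" using assms(3) by (intro mult_right_mono) auto
    finally show ?thesis .
  qed
  then have "w \<le> vsum p I" using V by linarith
  then obtain J where J: "J \<subseteq> I" "w \<le> vsum p J" "vsum p J \<le> w + 1/4"
    using split_exists[OF Suc(2,3), of w] assms(3) by auto
  define K where "K = I - J"
  have finJ: "finite J" "finite K" using J(1) Suc(2) finite_subset by (auto simp: K_def)
  have prJ: "pr01 p J" "pr01 p K" using Suc(3) J(1) by (auto simp: K_def pr01_def)
  have VK: "vsum p K \<ge> real (Suc m) * (w + 1/4)"
  proof -
    have "vsum p K = vsum p I - vsum p J" using vsum_split[OF Suc(2) J(1), of p] by (simp add: K_def)
    moreover have "real (Suc (Suc m)) * (w + 1/4) - (w + 1/4) = real (Suc m) * (w + 1/4)"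
      by (simp add: algebra_simps)
    ultimately show ?thesis using J(3) V by linarith
  qed
  have IHK: "EE p K (\<lambda>S. of_bool (real (Suc m) * sqrt w / 32 \<le> s * (real (card S) - msum p K)))
      \<ge> (3/4096)^(Suc m)" using Suc.IH[OF finJ(2) prJ(2) VK] .
  have "3/4096 \<le> EE p J (\<lambda>S. of_bool (sqrt (vsum p J) / 32 \<le> s * (real (card S) - msum p J)))"
    using block_lemma[OF finJ(1) prJ(1) _ assms(4)] J(2) assms(3) by simp
  also have "\<dots> \<le> EE p J (\<lambda>S. of_bool (sqrt w / 32 \<le> s * (real (card S) - msum p J)))"
  proof (intro EE_mono[OF prJ(1)])
    fix S
    have "sqrt w \<le> sqrt (vsum p J)" using J(2) by simp
    then have imp: "sqrt (vsum p J) / 32 \<le> x \<Longrightarrow> sqrt w / 32 \<le> x" for x by linarith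
    show "of_bool (sqrt (vsum p J) / 32 \<le> s * (real (card S) - msum p J))
        \<le> (of_bool (sqrt w / 32 \<le> s * (real (card S) - msum p J)) :: real)"
      by (rule of_bool_mono) (rule imp)
  qed
  finally have BJ: "3/4096 \<le> EE p J (\<lambda>S. of_bool (sqrt w / 32 \<le> s * (real (card S) - msum p J)))" .
  have IJK: "I = J \<union> K" "J \<inter> K = {}" using J(1) by (auto simp: K_def)
  have "(3/4096::real)^(Suc (Suc m)) = (3/4096) * (3/4096)^(Suc m)" by simp
  also have "\<dots> \<le> EE p J (\<lambda>S. of_bool (sqrt w / 32 \<le> s * (real (card S) - msum p J)))
      * EE p K (\<lambda>S. of_bool (real (Suc m) * sqrt w / 32 \<le> s * (real (card S) - msum p K)))"
    using BJ IHK by (intro mult_mono) auto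
  also have "\<dots> = EE p I (\<lambda>S. of_bool (sqrt w / 32 \<le> s * (real (card (S \<inter> J)) - msum p J))
      * of_bool (real (Suc m) * sqrt w / 32 \<le> s * (real (card (S \<inter> K)) - msum p K)))"
    unfolding IJK(1) using EE_split[OF finJ IJK(2), of p
      "\<lambda>T. of_bool (sqrt w / 32 \<le> s * (real (card T) - msum p J))"
      "\<lambda>T. of_bool (real (Suc m) * sqrt w / 32 \<le> s * (real (card T) - msum p K))"] by simp
  also have "\<dots> \<le> EE p I (\<lambda>S. of_bool (real (Suc (Suc m)) * sqrt w / 32 \<le> s * (real (card S) - msum p I)))"
  proof (intro EE_mono[OF Suc(3)])
    fix S assume S: "S \<subseteq> I"
    have "S = (S \<inter> J) \<union> (S \<inter> K)" using S IJK by auto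
    then have "card S = card (S \<inter> J) + card (S \<inter> K)"
      using finJ IJK(2) by (metis card_Un_disjoint disjoint_iff finite_Int inf_commute inf_left_commute Int_iff)
    moreover have "msum p I = msum p J + msum p K" using msum_split[OF Suc(2) J(1)] by (simp add: K_def)
    ultimately have eq: "s * (real (card S) - msum p I) = s * (real (card (S \<inter> J)) - msum p J)
        + s * (real (card (S \<inter> K)) - msum p K)" by (simp add: algebra_simps)
    show "of_bool (sqrt w / 32 \<le> s * (real (card (S \<inter> J)) - msum p J))
      * of_bool (real (Suc m) * sqrt w / 32 \<le> s * (real (card (S \<inter> K)) - msum p K))
      \<le> (of_bool (real (Suc (Suc m)) * sqrt w / 32 \<le> s * (real (card S) - msum p I)) :: real)"
    proof (rule of_bool_mult_mono)
      assume "sqrt w / 32 \<le> s * (real (card (S \<inter> J)) - msum p J)"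
        "real (Suc m) * sqrt w / 32 \<le> s * (real (card (S \<inter> K)) - msum p K)"
      moreover have "real (Suc (Suc m)) * sqrt w / 32 = sqrt w / 32 + real (Suc m) * sqrt w / 32"
        by (simp add: algebra_simps)
      ultimately show "real (Suc (Suc m)) * sqrt w / 32 \<le> s * (real (card S) - msum p I)"
        unfolding eq by linarith
    qed
  qed
  finally show ?case .
qed



lemma anticonc:
  assumes "K > 0"
  shows "\<exists>V0 \<eta>. \<eta> > 0 \<and> (\<forall>p I s. finite I \<longrightarrow> pr01 p I \<longrightarrow> vsum p I \<ge> V0 \<longrightarrow> s * s = 1 \<longrightarrow>
     EE p I (\<lambda>S. of_bool (K * sqrt (vsum p I) \<le> s * (real (card S) - msum p I))) \<ge> \<eta>)"
proof (intro exI conjI allI impI)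
  define m where "m = nat \<lceil>2048 * K^2\<rceil>"
  define M where "M = Suc m"
  show "(3/4096::real)^M > 0" by simp
  fix p I and s :: real assume fin: "finite I" and pr: "pr01 p I" and V0: "vsum p I \<ge> 2 * real M" and s: "s * s = 1"
  define V where "V = vsum p I"
  define w where "w = V / real M - 1/4"
  have Mpos: "real M > 0" by (simp add: M_def)
  have MK: "real M \<ge> 2048 * K^2"
  proof -
    have "2048 * K^2 \<le> real_of_int \<lceil>2048 * K^2\<rceil>" by (rule le_of_int_ceiling)
    also have "\<dots> = real m" using assms by (simp add: m_def)
    finally show ?thesis by (simp add: M_def)
  qed
  have VM: "V \<ge> 2 * real M" using V0 by (simp add: V_def)
  have "V / real M \<ge> 2" using VM Mpos by (simp add: field_simps)
  then have w1: "w \<ge> 1" by (simp add: w_def)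
  have Vw: "vsum p I \<ge> real (Suc m) * (w + 1/4)"
    using Mpos by (simp add: w_def V_def M_def[symmetric])
  have B: "EE p I (\<lambda>S. of_bool (real (Suc m) * sqrt w / 32 \<le> s * (real (card S) - msum p I)))
          \<ge> (3/4096)^(Suc m)" by (rule blocks[OF fin pr w1 s Vw])
  have Vpos: "V \<ge> 0" using VM Mpos by simp
  have key: "K * sqrt V \<le> real M * sqrt w / 32"
  proof (rule power2_le_imp_le)
    show "0 \<le> real M * sqrt w / 32" using w1 by simp
    have "(K * sqrt V)^2 = K^2 * V" using Vpos by (simp add: power_mult_distrib)
    also have "\<dots> \<le> (real M / 2048) * V" using MK Vpos by (intro mult_right_mono) auto
    also have "\<dots> \<le> (real M^2 * w) / 1024"
    proof -
      have "real M^2 * w = real M * V - real M^2 / 4" using Mpos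
        by (simp add: w_def power2_eq_square field_simps)
      moreover have "real M^2 / 4 \<le> real M * V / 2" using VM Mpos
        by (simp add: power2_eq_square field_simps)
      ultimately show ?thesis by (simp add: field_simps)
    qed
    also have "\<dots> = (real M * sqrt w / 32)^2" using w1 by (simp add: power_mult_distrib power_divide)
    finally show "(K * sqrt V)^2 \<le> (real M * sqrt w / 32)^2" .
  qed
  have "(3/4096)^M \<le> EE p I (\<lambda>S. of_bool (real (Suc m) * sqrt w / 32 \<le> s * (real (card S) - msum p I)))"
    using B by (simp add: M_def)
  also have "\<dots> \<le> EE p I (\<lambda>S. of_bool (K * sqrt (vsum p I) \<le> s * (real (card S) - msum p I)))"
  proof (intro EE_mono[OF pr] of_bool_mono)
    fix S assume "real (Suc m) * sqrt w / 32 \<le> s * (real (card S) - msum p I)"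
    then show "K * sqrt (vsum p I) \<le> s * (real (card S) - msum p I)"
      using key by (simp add: V_def M_def)
  qed
  finally show "(3/4096)^M \<le> EE p I (\<lambda>S. of_bool (K * sqrt (vsum p I) \<le> s * (real (card S) - msum p I)))" .
qed

lemma sum_Collect_Pow:
  fixes f :: "'a set \<Rightarrow> real"
  assumes "finite A"
  shows "(\<Sum>S | S \<subseteq> A \<and> P S. f S) = (\<Sum>S\<in>Pow A. if P S then f S else 0)"
proof -
  have "(\<Sum>S\<in>Pow A. if P S then f S else 0) = sum f {S \<in> Pow A. P S}"
    using assms by (intro sum.inter_filter[symmetric]) simp
  also have "{S \<in> Pow A. P S} = {S. S \<subseteq> A \<and> P S}" by auto
  finally show ?thesis by simp
qed

lemma winA_EE: "winA \<mu> Ph N \<Sigma> w =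
  EE (\<lambda>n. voteA_prob Ph w (\<Sigma> n)) {..<N} (\<lambda>S. of_bool (\<mu> * real N \<le> real (card S)))"
proof -
  have "{S. S \<subseteq> {..<N} \<and> \<mu> * real N \<le> real (card S)} = {S \<in> Pow {..<N}. \<mu> * real N \<le> real (card S)}"
    by auto
  show ?thesis unfolding winA_def EE_def set_weight_def sw_def
    by (subst sum_Collect_Pow) (auto simp: of_bool_def intro!: sum.cong)
qed

lemma winR_EE: "winR \<mu> Ph N \<Sigma> w =
  EE (\<lambda>n. voteA_prob Ph w (\<Sigma> n)) {..<N} (\<lambda>S. of_bool (real (card S) < \<mu> * real N))"
proof -
  have "{S. S \<subseteq> {..<N} \<and> real (card S) < \<mu> * real N} = {S \<in> Pow {..<N}. real (card S) < \<mu> * real N}"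
    by auto
  show ?thesis unfolding winR_def EE_def set_weight_def sw_def
    by (subst sum_Collect_Pow) (auto simp: of_bool_def intro!: sum.cong)
qed

lemma winR_eq: "winR \<mu> Ph N \<Sigma> w = 1 - winA \<mu> Ph N \<Sigma> w"
proof -
  have "winR \<mu> Ph N \<Sigma> w + winA \<mu> Ph N \<Sigma> w = EE (\<lambda>n. voteA_prob Ph w (\<Sigma> n)) {..<N} (\<lambda>S. 1)"
    unfolding winR_EE winA_EE EE_add[symmetric] by (intro EE_cong) auto
  then show ?thesis by (simp add: EE_const)
qed

lemma var_votes_eq: "var_votes Ph N \<Sigma> w = vsum (\<lambda>n. voteA_prob Ph w (\<Sigma> n)) {..<N}"
proof -
  define p where "p = (\<lambda>n. voteA_prob Ph w (\<Sigma> n))"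
  have m: "(\<Sum>S\<in>Pow {..<N}. set_weight p N S * real (card S)) = msum p {..<N}"
    using EE_mean[of "{..<N}" p] by (simp add: EE_def set_weight_def sw_def msum_def)
  show ?thesis unfolding var_votes_def Let_def p_def[symmetric] m
    using EE_var[of "{..<N}" p] by (simp add: EE_def set_weight_def sw_def msum_def vsum_def)
qed

lemma voteA_01: "valid_strategy \<sigma> \<Longrightarrow> 0 \<le> Ph w \<Longrightarrow> Ph w \<le> 1 \<Longrightarrow>
    0 \<le> voteA_prob Ph w \<sigma> \<and> voteA_prob Ph w \<sigma> \<le> 1"
proof -
  assume v: "valid_strategy \<sigma>" and "0 \<le> Ph w" "Ph w \<le> 1"
  then have "0 \<le> (1 - Ph w) * fst \<sigma>" "0 \<le> Ph w * snd \<sigma>" "(1 - Ph w) * fst \<sigma> \<le> (1 - Ph w)"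
      "Ph w * snd \<sigma> \<le> Ph w"
    by (auto simp: valid_strategy_def mult_left_le)
  then show ?thesis by (simp add: voteA_prob_def)
qed

lemma pr01_vote: "(\<forall>n<N. valid_strategy (\<Sigma> n)) \<Longrightarrow> 0 \<le> Ph w \<Longrightarrow> Ph w \<le> 1 \<Longrightarrow>
   pr01 (\<lambda>n. voteA_prob Ph w (\<Sigma> n)) {..<N}"
  unfolding pr01_def using voteA_01 by auto

lemma winA_01: "(\<forall>n<N. valid_strategy (\<Sigma> n)) \<Longrightarrow> 0 \<le> Ph w \<Longrightarrow> Ph w \<le> 1 \<Longrightarrow>
   0 \<le> winA \<mu> Ph N \<Sigma> w \<and> winA \<mu> Ph N \<Sigma> w \<le> 1"
proof -
  assume a: "\<forall>n<N. valid_strategy (\<Sigma> n)" "0 \<le> Ph w" "Ph w \<le> 1"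
  have pr: "pr01 (\<lambda>n. voteA_prob Ph w (\<Sigma> n)) {..<N}" using pr01_vote[of N \<Sigma> Ph w, OF a] .
  have "0 \<le> winA \<mu> Ph N \<Sigma> w" unfolding winA_EE by (rule EE_nonneg[OF pr]) simp
  moreover have "winA \<mu> Ph N \<Sigma> w \<le> EE (\<lambda>n. voteA_prob Ph w (\<Sigma> n)) {..<N} (\<lambda>S. 1)"
    unfolding winA_EE by (rule EE_mono[OF pr]) simp
  ultimately show ?thesis by (simp add: EE_const)
qed

lemma exp_util_eq: "exp_util prior Ph \<mu> N \<Sigma> u =
   prior Lo * real (u Lo Rej) + prior Hi * real (u Hi Rej)
   + prior Hi * winA \<mu> Ph N \<Sigma> Hi * (real (u Hi Acc) - real (u Hi Rej))
   + prior Lo * winA \<mu> Ph N \<Sigma> Lo * (real (u Lo Acc) - real (u Lo Rej))"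
  unfolding exp_util_def winR_eq by (simp add: algebra_simps)



lemma bnd_mult: "\<bar>a\<bar> \<le> (Bb::real) \<Longrightarrow> \<bar>x\<bar> \<le> X \<Longrightarrow> a * x \<le> Bb * X"
proof -
  assume "\<bar>a\<bar> \<le> Bb" "\<bar>x\<bar> \<le> X"
  then have "\<bar>a\<bar> * \<bar>x\<bar> \<le> Bb * X" by (intro mult_mono) auto
  moreover have "a * x \<le> \<bar>a\<bar> * \<bar>x\<bar>" by (simp add: abs_mult[symmetric])
  ultimately show ?thesis by linarith
qed

lemma core:
  fixes x y s t Bb :: real and al be :: "nat \<Rightarrow> real"
  assumes xs: "x \<le> s" and yt: "-t \<le> y" and s0: "0 \<le> s" and t0: "0 \<le> t" and B0: "0 \<le> Bb"
    and htyp: "\<forall>n\<in>D. F n \<or> U n \<or> C n"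
    and tF: "\<forall>n\<in>D. F n \<longrightarrow> be n < al n \<and> 0 < be n"
    and tU: "\<forall>n\<in>D. U n \<longrightarrow> be n < al n \<and> al n < 0"
    and tC: "\<forall>n\<in>D. C n \<longrightarrow> 1 \<le> al n \<and> be n \<le> -1"
    and bd: "\<forall>n\<in>D. \<bar>al n\<bar> \<le> Bb \<and> \<bar>be n\<bar> \<le> Bb"
    and gain: "\<forall>n\<in>D. 0 \<le> al n * x + be n * y"
    and allF: "(\<forall>n\<in>D. F n) \<longrightarrow> x \<le> 0 \<and> y \<le> 0"
    and allU: "(\<forall>n\<in>D. U n) \<longrightarrow> 0 \<le> x \<and> 0 \<le> y"
    and n: "n \<in> D"
  shows "al n * x + be n * y \<le> (Bb + Bb^2) * (s + t)"
proof -
  have st0: "0 \<le> (Bb + Bb^2) * (s + t)" using B0 s0 t0 by simp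
  show ?thesis
  proof (cases "\<exists>c\<in>D. C c")
    case True
    then obtain c where c: "c \<in> D" "C c" by blast
    have ac: "1 \<le> al c" "be c \<le> -1" "\<bar>al c\<bar> \<le> Bb" "\<bar>be c\<bar> \<le> Bb" "0 \<le> al c * x + be c * y"
      using tC bd gain c by auto
    have y1: "y \<le> Bb * s"
    proof (cases "y \<le> 0")
      case True then show ?thesis using B0 s0 by (meson mult_nonneg_nonneg order_trans)
    next
      case False
      have "1 * y \<le> (- be c) * y" using ac(2) False by (intro mult_right_mono) auto
      then have "y \<le> (- be c) * y" by simp
      also have "\<dots> \<le> al c * x" using ac(5) by simp
      also have "\<dots> \<le> Bb * s"
      proof (cases "x \<le> 0")
        case True
        then have "al c * x \<le> 0" using ac(1) by (simp add: mult_nonneg_nonpos)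
        then show ?thesis using B0 s0 by (meson mult_nonneg_nonneg order_trans)
      next
        case False
        have "al c * x \<le> Bb * x" using ac(3) False by (intro mult_right_mono) auto
        also have "\<dots> \<le> Bb * s" using B0 xs by (intro mult_left_mono)
        finally show ?thesis .
      qed
      finally show ?thesis .
    qed
    have x1: "- (Bb * t) \<le> x"
    proof (cases "0 \<le> x")
      case True then show ?thesis using B0 t0 by (meson mult_nonneg_nonneg neg_le_0_iff_le order_trans)
    next
      case False
      have "- (Bb * t) \<le> (- be c) * y"
      proof (cases "0 \<le> y")
        case True
        then have "0 \<le> (- be c) * y" using ac(2) by (intro mult_nonneg_nonneg) auto
        then show ?thesis using B0 t0 by (meson mult_nonneg_nonneg neg_le_0_iff_le order_trans)
      next
        case False
        have "Bb * y \<le> (- be c) * y" using ac(2,4) False by (intro mult_right_mono_neg) auto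
        moreover have "- (Bb * t) \<le> Bb * y" using B0 yt mult_left_mono[OF yt B0] by simp
        ultimately show ?thesis by linarith
      qed
      also have "\<dots> \<le> al c * x" using ac(5) by simp
      also have "\<dots> \<le> 1 * x" using ac(1) False by (intro mult_right_mono_neg) auto
      finally show ?thesis by simp
    qed
    have Bt: "0 \<le> Bb * t" "0 \<le> Bb * s" using B0 t0 s0 by auto
    have ax: "\<bar>x\<bar> \<le> s + Bb * t" using x1 xs Bt s0 by (auto simp: abs_if)
    have ay: "\<bar>y\<bar> \<le> t + Bb * s" using y1 yt Bt t0 by (auto simp: abs_if)
    have "al n * x \<le> Bb * (s + Bb * t)" using bnd_mult[OF _ ax] bd n by auto
    moreover have "be n * y \<le> Bb * (t + Bb * s)" using bnd_mult[OF _ ay] bd n by auto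
    ultimately show ?thesis by (simp add: power2_eq_square algebra_simps)
  next
    case noC: False
    have xy: "\<bar>x\<bar> \<le> s \<and> \<bar>y\<bar> \<le> t \<or> (al n * x + be n * y \<le> 0)"
    proof (cases "\<forall>m\<in>D. F m")
      case True
      then have "x \<le> 0" "y \<le> 0" using allF by auto
      moreover have "be n < al n" "0 < be n" using tF True n by auto
      ultimately have "al n * x \<le> 0" "be n * y \<le> 0" by (auto simp: mult_nonneg_nonpos)
      then show ?thesis by simp
    next
      case notF: False
      show ?thesis
      proof (cases "\<forall>m\<in>D. U m")
        case True
        then have "0 \<le> x" "0 \<le> y" using allU by auto
        moreover have "be n < al n" "al n < 0" using tU True n by auto
        ultimately have "al n * x \<le> 0" "be n * y \<le> 0" by (auto simp: mult_nonpos_nonneg)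
        then show ?thesis by simp
      next
        case False
        then obtain f where f: "f \<in> D" "F f" using htyp noC by blast
        obtain u where u: "u \<in> D" "U u" using notF htyp noC by blast
        have au: "be u < al u" "al u < 0" "0 \<le> al u * x + be u * y" using tU gain u by auto
        have af: "be f < al f" "0 < be f" "0 \<le> al f * x + be f * y" using tF gain f by auto
        have y0: "y \<le> 0"
        proof (rule ccontr)
          assume "\<not> y \<le> 0"
          then have yp: "0 < y" by simp
          have "(- al u) * y < (- be u) * y" using au yp by (intro mult_strict_right_mono) auto
          also have "\<dots> \<le> al u * x" using au by simp
          finally have "al u * (- y) < al u * x" by simp
          then have "x < - y" using au(2) mult_less_cancel_left_neg[of "al u" "- y" x] by simp
          then have "al f * x < al f * (- y)" using af by (intro mult_strict_left_mono) auto
          then have "0 < (be f - al f) * y" using af(3) by (simp add: algebra_simps)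
          moreover have "(be f - al f) * y < 0" using af yp by (intro mult_neg_pos) auto
          ultimately show False by simp
        qed
        have "be f * y \<le> 0" using af(2) y0 by (simp add: mult_nonneg_nonpos less_imp_le)
        then have "0 \<le> al f * x" using af(3) by linarith
        then have x0: "0 \<le> x" using af by (simp add: zero_le_mult_iff)
        show ?thesis using x0 xs y0 yt by auto
      qed
    qed
    then show ?thesis
    proof
      assume a: "\<bar>x\<bar> \<le> s \<and> \<bar>y\<bar> \<le> t"
      have "al n * x \<le> Bb * s" using bnd_mult[of "al n" Bb x s] bd n a by auto
      moreover have "be n * y \<le> Bb * t" using bnd_mult[of "be n" Bb y t] bd n a by auto
      moreover have "0 \<le> Bb^2 * (s + t)" using s0 t0 by simp
      ultimately show ?thesis by (simp add: algebra_simps)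
    next
      assume "al n * x + be n * y \<le> 0"
      then show ?thesis using st0 by linarith
    qed
  qed
qed



lemma gain_eq: "exp_util prior Ph \<mu> N \<Sigma>' u - exp_util prior Ph \<mu> N \<Sigma> u =
   (real (u Hi Acc) - real (u Hi Rej)) * (prior Hi * (winA \<mu> Ph N \<Sigma>' Hi - winA \<mu> Ph N \<Sigma> Hi))
 + (real (u Lo Acc) - real (u Lo Rej)) * (prior Lo * (winA \<mu> Ph N \<Sigma>' Lo - winA \<mu> Ph N \<Sigma> Lo))"
  unfolding exp_util_eq by (simp add: algebra_simps)

lemma winA_mono_p:
  assumes "\<forall>n<N. 0 \<le> p n \<and> p n \<le> p' n \<and> p' n \<le> 1"
  shows "EE p {..<N} (\<lambda>S. of_bool (\<mu> * real N \<le> real (card S))) \<le>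
         EE p' {..<N} (\<lambda>S. of_bool (\<mu> * real N \<le> real (card S)))"
proof (rule EE_mono_p)
  show "\<forall>i\<in>{..<N}. 0 \<le> p i \<and> p i \<le> p' i \<and> p' i \<le> 1" using assms by auto
  fix S T :: "nat set" assume "S \<subseteq> T" "T \<subseteq> {..<N}"
  then have "card S \<le> card T" by (meson card_mono finite_lessThan finite_subset)
  then show "(of_bool (\<mu> * real N \<le> real (card S)) :: real) \<le> of_bool (\<mu> * real N \<le> real (card T))"
    by (intro of_bool_mono) linarith
qed simp

lemma voteA_11: "voteA_prob Ph w (1, 1) = 1" by (simp add: voteA_prob_def)
lemma voteA_00: "voteA_prob Ph w (0, 0) = 0" by (simp add: voteA_prob_def)

lemma part_i_bne:
  fixes v :: "nat \<Rightarrow> wstate \<Rightarrow> outcome \<Rightarrow> nat"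
  assumes prior: "prior Lo > 0" "prior Hi > 0"
    and signal: "\<forall>w. 0 \<le> Ph w \<and> Ph w \<le> 1"
    and ub: "\<forall>n w x. v n w x \<le> B"
    and types: "\<forall>n<N. friendly (v n) \<or> unfriendly (v n) \<or> contingent (v n)"
    and reg: "regular N v \<Sigma>"
  shows "strong_BNE prior Ph \<mu> N v \<Sigma>
     ((real B + real B^2) * (prior Hi * (1 - winA \<mu> Ph N \<Sigma> Hi) + prior Lo * winA \<mu> Ph N \<Sigma> Lo))"
  unfolding strong_BNE_def
proof
  assume "\<exists>D \<Sigma>'. D \<subseteq> {..<N} \<and> (\<forall>n<N. valid_strategy (\<Sigma>' n)) \<and>
            (\<forall>n<N. n \<notin> D \<longrightarrow> \<Sigma>' n = \<Sigma> n) \<and>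
            (\<forall>n\<in>D. exp_util prior Ph \<mu> N \<Sigma>' (v n) \<ge> exp_util prior Ph \<mu> N \<Sigma> (v n)) \<and>
            (\<exists>n\<in>D. exp_util prior Ph \<mu> N \<Sigma>' (v n) > exp_util prior Ph \<mu> N \<Sigma> (v n) +
               (real B + real B^2) * (prior Hi * (1 - winA \<mu> Ph N \<Sigma> Hi) + prior Lo * winA \<mu> Ph N \<Sigma> Lo))"
  then obtain D \<Sigma>' where D: "D \<subseteq> {..<N}" and val': "\<forall>n<N. valid_strategy (\<Sigma>' n)"
    and same: "\<forall>n<N. n \<notin> D \<longrightarrow> \<Sigma>' n = \<Sigma> n"
    and weak: "\<forall>n\<in>D. exp_util prior Ph \<mu> N \<Sigma>' (v n) \<ge> exp_util prior Ph \<mu> N \<Sigma> (v n)"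
    and strict: "\<exists>n\<in>D. exp_util prior Ph \<mu> N \<Sigma>' (v n) > exp_util prior Ph \<mu> N \<Sigma> (v n) +
               (real B + real B^2) * (prior Hi * (1 - winA \<mu> Ph N \<Sigma> Hi) + prior Lo * winA \<mu> Ph N \<Sigma> Lo)"
    by blast
  have val: "\<forall>n<N. valid_strategy (\<Sigma> n)" using reg by (simp add: regular_def)
  define A where "A w = winA \<mu> Ph N \<Sigma> w" for w
  define A' where "A' w = winA \<mu> Ph N \<Sigma>' w" for w
  define x where "x = prior Hi * (A' Hi - A Hi)"
  define y where "y = prior Lo * (A' Lo - A Lo)"
  define s where "s = prior Hi * (1 - A Hi)"
  define t where "t = prior Lo * A Lo"
  define al where "al n = real (v n Hi Acc) - real (v n Hi Rej)" for n
  define be where "be n = real (v n Lo Acc) - real (v n Lo Rej)" for n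
  have A01: "0 \<le> A w \<and> A w \<le> 1" "0 \<le> A' w \<and> A' w \<le> 1" for w
    using winA_01[OF val] winA_01[OF val'] signal by (auto simp: A_def A'_def)
  have gn: "exp_util prior Ph \<mu> N \<Sigma>' (v n) - exp_util prior Ph \<mu> N \<Sigma> (v n) = al n * x + be n * y" for n
    unfolding gain_eq by (simp add: al_def be_def x_def y_def A_def A'_def)
  have wt: "\<forall>w. \<forall>n<N. n \<notin> D \<longrightarrow> voteA_prob Ph w (\<Sigma>' n) = voteA_prob Ph w (\<Sigma> n)" using same by simp
  have bnd: "\<forall>n\<in>D. al n * x + be n * y \<le> (real B + (real B)^2) * (s + t)"
  proof
    fix n assume n: "n \<in> D"
    show "al n * x + be n * y \<le> (real B + (real B)^2) * (s + t)"
    proof (rule core[where F="\<lambda>n. friendly (v n)" and U="\<lambda>n. unfriendly (v n)" and C="\<lambda>n. contingent (v n)" and D=D])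
      show "x \<le> s" using A01[of Hi] prior by (simp add: x_def s_def mult_left_mono)
      show "-t \<le> y" using A01[of Lo] prior by (simp add: y_def t_def right_diff_distrib)
      show "0 \<le> s" "0 \<le> t" using A01 prior by (auto simp: s_def t_def)
      show "0 \<le> real B" by simp
      show "\<forall>n\<in>D. friendly (v n) \<or> unfriendly (v n) \<or> contingent (v n)" using types D by auto
      show "\<forall>n\<in>D. friendly (v n) \<longrightarrow> be n < al n \<and> 0 < be n"
        by (auto simp: friendly_def al_def be_def)
      show "\<forall>n\<in>D. unfriendly (v n) \<longrightarrow> be n < al n \<and> al n < 0"
        by (auto simp: unfriendly_def al_def be_def)
      show "\<forall>n\<in>D. contingent (v n) \<longrightarrow> 1 \<le> al n \<and> be n \<le> -1"
        by (auto simp: contingent_def al_def be_def)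
      show "\<forall>n\<in>D. \<bar>al n\<bar> \<le> real B \<and> \<bar>be n\<bar> \<le> real B"
      proof
        fix m
        have "v m w z \<le> B" for w z using ub by auto
        then show "\<bar>al m\<bar> \<le> real B \<and> \<bar>be m\<bar> \<le> real B"
          unfolding al_def be_def by (smt (verit) of_nat_0_le_iff of_nat_le_iff)
      qed
      show "\<forall>n\<in>D. 0 \<le> al n * x + be n * y" using weak gn by (metis diff_ge_0_iff_ge)
      show "(\<forall>n\<in>D. friendly (v n)) \<longrightarrow> x \<le> 0 \<and> y \<le> 0"
      proof
        assume allF: "\<forall>n\<in>D. friendly (v n)"
        have "A' w \<le> A w" for w
        proof -
          have "\<forall>n<N. 0 \<le> voteA_prob Ph w (\<Sigma>' n) \<and> voteA_prob Ph w (\<Sigma>' n) \<le> voteA_prob Ph w (\<Sigma> n)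
              \<and> voteA_prob Ph w (\<Sigma> n) \<le> 1"
          proof (intro allI impI)
            fix n assume n: "n < N"
            have "0 \<le> voteA_prob Ph w (\<Sigma>' n) \<and> voteA_prob Ph w (\<Sigma>' n) \<le> 1"
              "0 \<le> voteA_prob Ph w (\<Sigma> n) \<and> voteA_prob Ph w (\<Sigma> n) \<le> 1"
              using voteA_01 val' val signal n by auto
            moreover have "voteA_prob Ph w (\<Sigma>' n) \<le> voteA_prob Ph w (\<Sigma> n)"
            proof (cases "n \<in> D")
              case True
              then have "\<Sigma> n = (1, 1)" using allF reg n by (auto simp: regular_def)
              then show ?thesis using calculation by (simp add: voteA_11)
            next
              case False then show ?thesis using wt n by simp
            qed
            ultimately show "0 \<le> voteA_prob Ph w (\<Sigma>' n) \<and> voteA_prob Ph w (\<Sigma>' n) \<le> voteA_prob Ph w (\<Sigma> n)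
              \<and> voteA_prob Ph w (\<Sigma> n) \<le> 1" by auto
          qed
          from winA_mono_p[OF this, of \<mu>] show ?thesis by (simp add: A_def A'_def winA_EE)
        qed
        then show "x \<le> 0 \<and> y \<le> 0" using prior
          by (simp add: x_def y_def mult_nonneg_nonpos less_imp_le)
      qed
      show "(\<forall>n\<in>D. unfriendly (v n)) \<longrightarrow> 0 \<le> x \<and> 0 \<le> y"
      proof
        assume allU: "\<forall>n\<in>D. unfriendly (v n)"
        have "A w \<le> A' w" for w
        proof -
          have "\<forall>n<N. 0 \<le> voteA_prob Ph w (\<Sigma> n) \<and> voteA_prob Ph w (\<Sigma> n) \<le> voteA_prob Ph w (\<Sigma>' n)
              \<and> voteA_prob Ph w (\<Sigma>' n) \<le> 1"
          proof (intro allI impI)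
            fix n assume n: "n < N"
            have "0 \<le> voteA_prob Ph w (\<Sigma>' n) \<and> voteA_prob Ph w (\<Sigma>' n) \<le> 1"
              "0 \<le> voteA_prob Ph w (\<Sigma> n) \<and> voteA_prob Ph w (\<Sigma> n) \<le> 1"
              using voteA_01 val' val signal n by auto
            moreover have "voteA_prob Ph w (\<Sigma> n) \<le> voteA_prob Ph w (\<Sigma>' n)"
            proof (cases "n \<in> D")
              case True
              then have "\<Sigma> n = (0, 0)" using allU reg n by (auto simp: regular_def)
              then show ?thesis using calculation by (simp add: voteA_00)
            next
              case False then show ?thesis using wt n by simp
            qed
            ultimately show "0 \<le> voteA_prob Ph w (\<Sigma> n) \<and> voteA_prob Ph w (\<Sigma> n) \<le> voteA_prob Ph w (\<Sigma>' n)
              \<and> voteA_prob Ph w (\<Sigma>' n) \<le> 1" by auto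
          qed
          from winA_mono_p[OF this, of \<mu>] show ?thesis by (simp add: A_def A'_def winA_EE)
        qed
        then show "0 \<le> x \<and> 0 \<le> y" using prior by (simp add: x_def y_def)
      qed
    qed (rule n)
  qed
  from strict obtain n where n: "n \<in> D" and g: "exp_util prior Ph \<mu> N \<Sigma>' (v n) > exp_util prior Ph \<mu> N \<Sigma> (v n) +
               (real B + real B^2) * (prior Hi * (1 - winA \<mu> Ph N \<Sigma> Hi) + prior Lo * winA \<mu> Ph N \<Sigma> Lo)" by blast
  have "al n * x + be n * y > (real B + (real B)^2) * (s + t)"
    using g gn[of n] by (simp add: s_def t_def A_def)
  then show False using bnd n by fastforce
qed



lemma cheb_H:
  assumes N: "N \<ge> 1" and pr: "pr01 p {..<N}" and c: "0 < c" "c \<le> msum p {..<N} / real N - \<mu>"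
  shows "EE p {..<N} (\<lambda>S. of_bool (real (card S) < \<mu> * real N)) \<le> 1 / (4 * real N * c^2)"
proof -
  define a where "a = real N * c"
  have Np: "real N > 0" using N by simp
  have a0: "a > 0" using Np c by (simp add: a_def)
  have am: "a \<le> msum p {..<N} - \<mu> * real N" using c Np by (simp add: a_def field_simps)
  have "EE p {..<N} (\<lambda>S. of_bool (real (card S) < \<mu> * real N))
      \<le> EE p {..<N} (\<lambda>S. of_bool (a \<le> \<bar>real (card S) - msum p {..<N}\<bar>))"
    by (intro EE_mono[OF pr] of_bool_mono) (use am in linarith)
  also have "\<dots> \<le> vsum p {..<N} / a^2" by (rule chebyshev[OF _ pr a0]) simp
  also have "\<dots> \<le> (real N / 4) / a^2" using vsum_le[of p "{..<N}"] a0 by (intro divide_right_mono) auto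
  also have "\<dots> = 1 / (4 * real N * c^2)" using Np c by (simp add: a_def power2_eq_square field_simps)
  finally show ?thesis .
qed

lemma cheb_L:
  assumes N: "N \<ge> 1" and pr: "pr01 p {..<N}" and c: "0 < c" "c \<le> \<mu> - msum p {..<N} / real N"
  shows "EE p {..<N} (\<lambda>S. of_bool (\<mu> * real N \<le> real (card S))) \<le> 1 / (4 * real N * c^2)"
proof -
  define a where "a = real N * c"
  have Np: "real N > 0" using N by simp
  have a0: "a > 0" using Np c by (simp add: a_def)
  have am: "a \<le> \<mu> * real N - msum p {..<N}" using c Np by (simp add: a_def field_simps)
  have "EE p {..<N} (\<lambda>S. of_bool (\<mu> * real N \<le> real (card S)))
      \<le> EE p {..<N} (\<lambda>S. of_bool (a \<le> \<bar>real (card S) - msum p {..<N}\<bar>))"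
    by (intro EE_mono[OF pr] of_bool_mono) (use am in linarith)
  also have "\<dots> \<le> vsum p {..<N} / a^2" by (rule chebyshev[OF _ pr a0]) simp
  also have "\<dots> \<le> (real N / 4) / a^2" using vsum_le[of p "{..<N}"] a0 by (intro divide_right_mono) auto
  also have "\<dots> = 1 / (4 * real N * c^2)" using Np c by (simp add: a_def power2_eq_square field_simps)
  finally show ?thesis .
qed

lemma excess_parts:
  assumes "N \<ge> 1"
  shows "excess Ph \<mu> N \<Sigma> = min (msum (\<lambda>n. voteA_prob Ph Hi (\<Sigma> n)) {..<N} / real N - \<mu>)
                                  (\<mu> - msum (\<lambda>n. voteA_prob Ph Lo (\<Sigma> n)) {..<N} / real N)"
proof -
  have "(\<Sum>n<N. 1 - voteA_prob Ph Lo (\<Sigma> n)) = real N - msum (\<lambda>n. voteA_prob Ph Lo (\<Sigma> n)) {..<N}"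
    by (simp add: sum_subtractf msum_def)
  then have "(\<Sum>n<N. 1 - voteA_prob Ph Lo (\<Sigma> n)) / real N - (1 - \<mu>) =
      \<mu> - msum (\<lambda>n. voteA_prob Ph Lo (\<Sigma> n)) {..<N} / real N"
    using assms by (simp add: field_simps)
  then show ?thesis unfolding excess_def by (simp add: msum_def)
qed

lemma eps_bound:
  assumes N: "N \<ge> 1" and val: "\<forall>n<N. valid_strategy (\<Sigma> n)" and signal: "\<forall>w. 0 \<le> Ph w \<and> Ph w \<le> 1"
    and g: "sqrt (real N) * excess Ph \<mu> N \<Sigma> > 0"
  shows "1 - winA \<mu> Ph N \<Sigma> Hi \<le> 1 / (4 * (sqrt (real N) * excess Ph \<mu> N \<Sigma>)^2)"
        "winA \<mu> Ph N \<Sigma> Lo \<le> 1 / (4 * (sqrt (real N) * excess Ph \<mu> N \<Sigma>)^2)"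
proof -
  define c where "c = excess Ph \<mu> N \<Sigma>"
  have Np: "real N > 0" using N by simp
  have c0: "c > 0" using g Np by (simp add: c_def zero_less_mult_iff)
  have eq: "4 * (sqrt (real N) * c)^2 = 4 * real N * c^2" using Np by (simp add: power_mult_distrib)
  have cH: "c \<le> msum (\<lambda>n. voteA_prob Ph Hi (\<Sigma> n)) {..<N} / real N - \<mu>"
    and cL: "c \<le> \<mu> - msum (\<lambda>n. voteA_prob Ph Lo (\<Sigma> n)) {..<N} / real N"
    unfolding c_def excess_parts[OF N] by auto
  have "1 - winA \<mu> Ph N \<Sigma> Hi = winR \<mu> Ph N \<Sigma> Hi" by (simp add: winR_eq)
  also have "\<dots> \<le> 1 / (4 * real N * c^2)"
    unfolding winR_EE using cheb_H[OF N pr01_vote[OF val] c0 cH] signal by auto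
  finally show "1 - winA \<mu> Ph N \<Sigma> Hi \<le> 1 / (4 * (sqrt (real N) * excess Ph \<mu> N \<Sigma>)^2)"
    using eq by (simp add: c_def)
  have "winA \<mu> Ph N \<Sigma> Lo \<le> 1 / (4 * real N * c^2)"
    unfolding winA_EE using cheb_L[OF N pr01_vote[OF val] c0 cL] signal by auto
  then show "winA \<mu> Ph N \<Sigma> Lo \<le> 1 / (4 * (sqrt (real N) * excess Ph \<mu> N \<Sigma>)^2)"
    using eq by (simp add: c_def)
qed

lemma part_i_limit:
  fixes \<Sigma> :: "nat \<Rightarrow> nat \<Rightarrow> strategy"
  assumes prior: "prior Lo > 0" "prior Hi > 0" "prior Lo + prior Hi = 1"
    and signal: "\<forall>w. 0 \<le> Ph w \<and> Ph w \<le> 1"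
    and val: "\<forall>N\<ge>1. \<forall>n<N. valid_strategy (\<Sigma> N n)"
    and lim: "liminf (\<lambda>N. ereal (sqrt (real N) * excess Ph \<mu> N (\<Sigma> N))) = \<infinity>"
    and Kc: "Kc \<ge> 0"
  shows "(\<lambda>N. Kc * (prior Hi * (1 - winA \<mu> Ph N (\<Sigma> N) Hi) + prior Lo * winA \<mu> Ph N (\<Sigma> N) Lo)) \<longlonglongrightarrow> 0"
proof (rule tendstoI)
  fix e :: real assume e: "e > 0"
  define g where "g N = sqrt (real N) * excess Ph \<mu> N (\<Sigma> N)" for N
  have "(\<lambda>N. ereal (g N)) \<longlonglongrightarrow> \<infinity>" using lim liminf_PInfty by (simp add: g_def)
  then have ev: "\<forall>r. eventually (\<lambda>N. ereal r < ereal (g N)) sequentially" by (simp add: tendsto_PInfty)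
  define r where "r = sqrt (Kc / e) + 1"
  have "0 \<le> Kc / e" using Kc e by simp
  then have "0 \<le> sqrt (Kc / e)" by simp
  then have r0: "r > 0" unfolding r_def by linarith
  have "eventually (\<lambda>N. r < g N \<and> N \<ge> 1) sequentially"
    using ev[rule_format, of r] eventually_ge_at_top[of 1] by eventually_elim auto
  then show "eventually (\<lambda>N. dist (Kc * (prior Hi * (1 - winA \<mu> Ph N (\<Sigma> N) Hi) + prior Lo * winA \<mu> Ph N (\<Sigma> N) Lo)) 0 < e) sequentially"
  proof eventually_elim
    case (elim N)
    then have N: "N \<ge> 1" and gr: "r < g N" by auto
    have gp: "g N > 0" using gr r0 by simp
    have val': "\<forall>n<N. valid_strategy (\<Sigma> N n)" using val N by auto
    note b = eps_bound[OF N val' signal gp[unfolded g_def]]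
    define q where "q = 1 / (4 * (g N)^2)"
    have A01: "0 \<le> winA \<mu> Ph N (\<Sigma> N) w \<and> winA \<mu> Ph N (\<Sigma> N) w \<le> 1" for w
      using winA_01[OF val'] signal by auto
    have t0: "0 \<le> prior Hi * (1 - winA \<mu> Ph N (\<Sigma> N) Hi) + prior Lo * winA \<mu> Ph N (\<Sigma> N) Lo"
      using A01[of Hi] A01[of Lo] prior by simp
    have "prior Hi * (1 - winA \<mu> Ph N (\<Sigma> N) Hi) + prior Lo * winA \<mu> Ph N (\<Sigma> N) Lo
        \<le> prior Hi * q + prior Lo * q"
      using b prior by (intro add_mono mult_left_mono) (auto simp: q_def g_def)
    also have "\<dots> = q * (prior Lo + prior Hi)" by (simp add: algebra_simps)
    also have "\<dots> = q" using prior by simp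
    finally have tq: "prior Hi * (1 - winA \<mu> Ph N (\<Sigma> N) Hi) + prior Lo * winA \<mu> Ph N (\<Sigma> N) Lo \<le> q" .
    have "Kc / e < (g N)^2"
    proof -
      have "Kc / e \<le> (sqrt (Kc / e))^2" using Kc e by simp
      also have "\<dots> < r^2" unfolding r_def using Kc e by (intro power_strict_mono) auto
      also have "\<dots> < (g N)^2" using gr r0 by (intro power_strict_mono) auto
      finally show ?thesis .
    qed
    then have "Kc < e * (g N)^2" using e by (simp add: field_simps)
    moreover have "e * (g N)^2 \<le> e * (4 * (g N)^2)" using e by simp
    ultimately have "Kc < e * (4 * (g N)^2)" by linarith
    then have "Kc * q < e" using e gp by (simp add: q_def field_simps)
    moreover have "Kc * (prior Hi * (1 - winA \<mu> Ph N (\<Sigma> N) Hi) + prior Lo * winA \<mu> Ph N (\<Sigma> N) Lo) \<le> Kc * q"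
      using tq Kc by (intro mult_left_mono) auto
    moreover have "0 \<le> Kc * (prior Hi * (1 - winA \<mu> Ph N (\<Sigma> N) Hi) + prior Lo * winA \<mu> Ph N (\<Sigma> N) Lo)"
      using t0 Kc by simp
    ultimately show ?case by (simp add: dist_real_def)
  qed
qed



lemma exists_sigma:
  fixes a b \<tau> :: real
  assumes "0 \<le> a" "a < b" "b \<le> 1" "0 < \<tau>" "\<tau> < 1"
  shows "\<exists>\<sigma>. valid_strategy \<sigma> \<and> (1 - a) * fst \<sigma> + a * snd \<sigma> < \<tau> \<and> \<tau> < (1 - b) * fst \<sigma> + b * snd \<sigma>"
proof (cases "\<tau> < (a + b) / 2")
  case True
  define \<beta> where "\<beta> = 2 * \<tau> / (a + b)"
  have ab: "a + b > 0" using assms by linarith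
  have b1: "\<beta> \<le> 1" "0 \<le> \<beta>" using True ab assms by (auto simp: \<beta>_def field_simps)
  have "a * \<beta> < \<tau>" using assms ab by (simp add: \<beta>_def field_simps)
  moreover have "\<tau> < b * \<beta>" using assms ab by (simp add: \<beta>_def field_simps)
  ultimately show ?thesis using b1
    by (intro exI[of _ "(0, \<beta>)"]) (simp add: valid_strategy_def)
next
  case False
  define \<gamma> where "\<gamma> = 2 * (1 - \<tau>) / (2 - a - b)"
  have ab: "2 - a - b > 0" using assms by linarith
  have g1: "\<gamma> \<le> 1" "0 \<le> \<gamma>" using False ab assms by (auto simp: \<gamma>_def field_simps)
  have pp: "0 < (1 - \<tau>) * (b - a)" using assms by simp
  have lo: "1 - \<tau> < \<gamma> * (1 - a)" using assms ab pp
    by (simp add: \<gamma>_def field_simps algebra_simps)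
  have hi: "\<gamma> * (1 - b) < 1 - \<tau>" using assms ab pp
    by (simp add: \<gamma>_def field_simps algebra_simps)
  show ?thesis
  proof (intro exI[of _ "(1 - \<gamma>, 1)"] conjI)
    show "valid_strategy (1 - \<gamma>, 1)" using g1 by (simp add: valid_strategy_def)
    show "(1 - a) * fst (1 - \<gamma>, 1) + a * snd (1 - \<gamma>, 1) < \<tau>" using lo by (simp add: algebra_simps)
    show "\<tau> < (1 - b) * fst (1 - \<gamma>, 1) + b * snd (1 - \<gamma>, 1)" using hi by (simp add: algebra_simps)
  qed
qed

lemma type_disj: "friendly u \<Longrightarrow> \<not> unfriendly u" "friendly u \<Longrightarrow> \<not> contingent u"
  "unfriendly u \<Longrightarrow> \<not> contingent u"
  by (auto simp: friendly_def unfriendly_def contingent_def)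

lemma card_partition:
  fixes v :: "nat \<Rightarrow> wstate \<Rightarrow> outcome \<Rightarrow> nat"
  assumes "\<forall>n<N. friendly (v n) \<or> unfriendly (v n) \<or> contingent (v n)"
  shows "card {n. n < N \<and> friendly (v n)} + card {n. n < N \<and> unfriendly (v n)}
         + card {n. n < N \<and> contingent (v n)} = N"
proof -
  have "{..<N} = ({n. n < N \<and> friendly (v n)} \<union> {n. n < N \<and> unfriendly (v n)}) \<union> {n. n < N \<and> contingent (v n)}"
    using assms by auto
  then have "N = card (({n. n < N \<and> friendly (v n)} \<union> {n. n < N \<and> unfriendly (v n)}) \<union> {n. n < N \<and> contingent (v n)})"
    by (metis card_lessThan)
  also have "\<dots> = card ({n. n < N \<and> friendly (v n)} \<union> {n. n < N \<and> unfriendly (v n)}) + card {n. n < N \<and> contingent (v n)}"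
    by (rule card_Un_disjoint) (auto dest: type_disj)
  also have "card ({n. n < N \<and> friendly (v n)} \<union> {n. n < N \<and> unfriendly (v n)}) =
      card {n. n < N \<and> friendly (v n)} + card {n. n < N \<and> unfriendly (v n)}"
    by (rule card_Un_disjoint) (auto dest: type_disj)
  finally show ?thesis by simp
qed

lemma msum_dev:
  fixes v :: "nat \<Rightarrow> wstate \<Rightarrow> outcome \<Rightarrow> nat"
  assumes reg: "regular N v \<Sigma>" and types: "\<forall>n<N. friendly (v n) \<or> unfriendly (v n) \<or> contingent (v n)"
  shows "msum (\<lambda>n. voteA_prob Ph w (if contingent (v n) then \<sigma> else \<Sigma> n)) {..<N} =
     real (card {n. n < N \<and> friendly (v n)}) + voteA_prob Ph w \<sigma> * real (card {n. n < N \<and> contingent (v n)})"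
proof -
  have "msum (\<lambda>n. voteA_prob Ph w (if contingent (v n) then \<sigma> else \<Sigma> n)) {..<N} =
      (\<Sum>n<N. of_bool (friendly (v n)) + voteA_prob Ph w \<sigma> * of_bool (contingent (v n)))"
    unfolding msum_def
  proof (intro sum.cong refl)
    fix n assume "n \<in> {..<N}"
    then have n: "n < N" by simp
    show "voteA_prob Ph w (if contingent (v n) then \<sigma> else \<Sigma> n) =
        of_bool (friendly (v n)) + voteA_prob Ph w \<sigma> * of_bool (contingent (v n))"
    proof (cases "contingent (v n)")
      case True then show ?thesis by (auto dest: type_disj)
    next
      case False
      show ?thesis
      proof (cases "friendly (v n)")
        case True
        then have "\<Sigma> n = (1, 1)" using reg n by (simp add: regular_def)
        then show ?thesis using False True by (simp add: voteA_11)
      next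
        case nF: False
        then have "unfriendly (v n)" using False types n by auto
        then have "\<Sigma> n = (0, 0)" using reg n by (simp add: regular_def)
        then show ?thesis using False nF by (simp add: voteA_00)
      qed
    qed
  qed
  also have "\<dots> = real (card {n. n < N \<and> friendly (v n)}) + voteA_prob Ph w \<sigma> * real (card {n. n < N \<and> contingent (v n)})"
  proof -
    have e1: "{..<N} \<inter> {x. friendly (v x)} = {n. n < N \<and> friendly (v n)}" by auto
    have e2: "{..<N} \<inter> {x. contingent (v x)} = {n. n < N \<and> contingent (v n)}" by auto
    show ?thesis by (simp add: sum.distrib sum_distrib_left[symmetric] e1 e2)
  qed
  finally show ?thesis .
qed



lemma gain_lower:
  fixes al be Bb pr pH pL AH AL AH' AL' \<kappa> \<eta> :: real
  assumes al: "1 \<le> al" "al \<le> Bb" and be: "-Bb \<le> be" "be \<le> -1"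
    and pr: "0 < pr" "pr \<le> pH" "pr \<le> pL" "pH \<le> 1" "pL \<le> 1"
    and A: "0 \<le> AH" "AH \<le> 1" "0 \<le> AL" "AL \<le> 1" "1 - \<kappa> \<le> AH'" "AH' \<le> 1" "0 \<le> AL'" "AL' \<le> \<kappa>"
    and eta: "0 < \<eta>" and kap: "\<kappa> = pr * \<eta> / (4 * (Bb + 1))"
    and fail: "\<eta> \<le> 1 - AH \<or> \<eta> \<le> AL"
  shows "al * (pH * (AH' - AH)) + be * (pL * (AL' - AL)) > pr * \<eta> / 2"
proof -
  have B0: "0 \<le> Bb" using al by linarith
  have k0: "0 \<le> \<kappa>" using kap pr eta B0 by simp
  have kB: "(pr + Bb) * \<kappa> \<le> pr * \<eta> / 4"
  proof -
    have "pr \<le> 1" using pr by linarith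
    then have "(pr + Bb) * \<kappa> \<le> (1 + Bb) * \<kappa>" using k0 by (intro mult_right_mono) auto
    also have "\<dots> = pr * \<eta> / 4" using B0 by (simp add: kap field_simps)
    finally show ?thesis .
  qed
  have ke: "\<kappa> \<le> \<eta>"
  proof -
    have "pr * \<kappa> \<le> (pr + Bb) * \<kappa>" using B0 k0 by (intro mult_right_mono) auto
    also have "\<dots> \<le> pr * \<eta> / 4" by (rule kB)
    finally have "pr * \<kappa> \<le> pr * (\<eta> / 4)" by simp
    then have "\<kappa> \<le> \<eta> / 4" using pr by simp
    then show ?thesis using eta by linarith
  qed
  show ?thesis
    using fail
  proof
    assume f: "\<eta> \<le> 1 - AH"
    define x where "x = pH * (AH' - AH)"
    define y where "y = pL * (AL' - AL)"
    have d: "\<eta> - \<kappa> \<le> AH' - AH" using f A by linarith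
    have "pr * (\<eta> - \<kappa>) \<le> pH * (\<eta> - \<kappa>)" using pr ke by (intro mult_right_mono) auto
    also have "\<dots> \<le> x" unfolding x_def using d pr by (intro mult_left_mono) auto
    finally have x1: "pr * (\<eta> - \<kappa>) \<le> x" .
    have x0: "0 \<le> x" using x1 pr ke by (smt (verit) mult_nonneg_nonneg)
    have "1 * x \<le> al * x" using al x0 by (intro mult_right_mono) auto
    then have ax: "x \<le> al * x" by simp
    have y1: "y \<le> \<kappa>"
    proof -
      have "AL' - AL \<le> \<kappa>" using A by linarith
      then have "y \<le> pL * \<kappa>" unfolding y_def using pr by (intro mult_left_mono) auto
      also have "\<dots> \<le> 1 * \<kappa>" using pr k0 by (intro mult_right_mono) auto
      finally show ?thesis by simp
    qed
    have bey: "- (Bb * \<kappa>) \<le> be * y"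
    proof (cases "y \<le> 0")
      case True
      then have "0 \<le> be * y" using be by (intro mult_nonpos_nonpos) auto
      moreover have "0 \<le> Bb * \<kappa>" using B0 k0 by simp
      ultimately show ?thesis by linarith
    next
      case False
      have "(- Bb) * y \<le> be * y" using be False by (intro mult_right_mono) auto
      moreover have "Bb * y \<le> Bb * \<kappa>" using y1 B0 by (intro mult_left_mono)
      ultimately show ?thesis by simp
    qed
    have "pr * \<eta> - (pr + Bb) * \<kappa> \<le> al * x + be * y"
      using x1 ax bey by (simp add: algebra_simps)
    moreover have "pr * \<eta> / 2 < pr * \<eta> - pr * \<eta> / 4" using pr eta by simp
    ultimately show ?thesis using kB unfolding x_def y_def by linarith
  next
    assume f: "\<eta> \<le> AL"
    define x where "x = pH * (AH' - AH)"
    define y where "y = pL * (AL' - AL)"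
    have d: "AL' - AL \<le> \<kappa> - \<eta>" using f A by linarith
    have "y \<le> pL * (\<kappa> - \<eta>)" unfolding y_def using d pr by (intro mult_left_mono) auto
    also have "\<dots> \<le> pr * (\<kappa> - \<eta>)" using pr ke by (intro mult_right_mono_neg) auto
    finally have y1: "y \<le> pr * (\<kappa> - \<eta>)" .
    have y0: "y \<le> 0" using y1 pr ke by (smt (verit) mult_nonneg_nonpos)
    have "be * y \<ge> (-1) * y" using be y0 by (intro mult_right_mono_neg) auto
    then have bey: "pr * (\<eta> - \<kappa>) \<le> be * y" using y1 by (simp add: algebra_simps)
    have x1: "- \<kappa> \<le> x"
    proof -
      have "- \<kappa> \<le> AH' - AH" using A by linarith
      then have "pH * (- \<kappa>) \<le> x" unfolding x_def using pr by (intro mult_left_mono) auto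
      moreover have "pH * \<kappa> \<le> 1 * \<kappa>" using pr k0 by (intro mult_right_mono) auto
      ultimately show ?thesis by simp
    qed
    have ax: "- (Bb * \<kappa>) \<le> al * x"
    proof (cases "0 \<le> x")
      case True
      then have "0 \<le> al * x" using al by simp
      moreover have "0 \<le> Bb * \<kappa>" using B0 k0 by simp
      ultimately show ?thesis by linarith
    next
      case False
      have "Bb * x \<le> al * x" using al False by (intro mult_right_mono_neg) auto
      moreover have "Bb * (- \<kappa>) \<le> Bb * x" using x1 B0 by (intro mult_left_mono)
      ultimately show ?thesis by simp
    qed
    have "pr * \<eta> - (pr + Bb) * \<kappa> \<le> al * x + be * y"
      using bey ax by (simp add: algebra_simps)
    moreover have "pr * \<eta> / 2 < pr * \<eta> - pr * \<eta> / 4" using pr eta by simp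
    ultimately show ?thesis using kB unfolding x_def y_def by linarith
  qed
qed


lemma floor_bounds: "0 \<le> (x::real) \<Longrightarrow> real (nat \<lfloor>x\<rfloor>) \<le> x \<and> x - 1 \<le> real (nat \<lfloor>x\<rfloor>)"
proof -
  assume x: "0 \<le> x"
  have "0 \<le> \<lfloor>x\<rfloor>" using x by simp
  then have e: "real (nat \<lfloor>x\<rfloor>) = real_of_int \<lfloor>x\<rfloor>" by simp
  show ?thesis unfolding e using of_int_floor_le[of x] real_of_int_floor_add_one_gt[of x] by linarith
qed

lemma infinite_tail: "infinite (A::nat set) \<Longrightarrow> infinite {N \<in> A. N0 \<le> N}"
proof -
  assume "infinite A"
  then have "infinite (A - {..<N0})" by (simp add: Diff_infinite_finite)
  moreover have "A - {..<N0} = {N \<in> A. N0 \<le> N}" by auto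
  ultimately show ?thesis by simp
qed

lemma deviation:
  fixes prior Ph :: "wstate \<Rightarrow> real" and \<mu> \<alpha>F \<alpha>U \<alpha>C :: real and B :: nat
    and v :: "nat \<Rightarrow> nat \<Rightarrow> wstate \<Rightarrow> outcome \<Rightarrow> nat"
    and \<Sigma> :: "nat \<Rightarrow> nat \<Rightarrow> strategy"
  assumes prior: "prior Lo > 0" "prior Hi > 0" "prior Lo + prior Hi = 1"
    and signal: "\<forall>w. 0 \<le> Ph w \<and> Ph w \<le> 1" "Ph Hi > Ph Lo"
    and mu: "0 < \<mu>" "\<mu> < 1"
    and alpha: "\<alpha>F \<ge> 0" "\<alpha>U \<ge> 0" "\<alpha>C \<ge> 0" "\<alpha>F + \<alpha>U + \<alpha>C = 1"
      "\<alpha>F < \<mu>" "\<alpha>U < 1 - \<mu>"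
    and util_bound: "\<forall>N n w x. v N n w x \<le> B"
    and types: "\<forall>N n. n < N \<longrightarrow> friendly (v N n) \<or> unfriendly (v N n) \<or> contingent (v N n)"
    and countF: "\<forall>N. card {n. n < N \<and> friendly (v N n)} = nat \<lfloor>\<alpha>F * real N\<rfloor>"
    and countU: "\<forall>N. card {n. n < N \<and> unfriendly (v N n)} = nat \<lfloor>\<alpha>U * real N\<rfloor>"
    and reg: "\<forall>N\<ge>1. regular N (v N) (\<Sigma> N)"
    and eta: "\<eta> > 0"
    and inf: "infinite {N. N \<ge> 1 \<and> (\<eta> \<le> 1 - winA \<mu> Ph N (\<Sigma> N) Hi \<or> \<eta> \<le> winA \<mu> Ph N (\<Sigma> N) Lo)}"
  shows "\<exists>\<epsilon>>0. infinite {N. N \<ge> 1 \<and> \<not> strong_BNE prior Ph \<mu> N (v N) (\<Sigma> N) \<epsilon>}"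
proof -
  have aC: "\<alpha>C > 0" using alpha mu by linarith
  define \<tau> where "\<tau> = (\<mu> - \<alpha>F) / \<alpha>C"
  have tau: "0 < \<tau>" "\<tau> < 1" using aC alpha mu by (auto simp: \<tau>_def field_simps)
  obtain \<sigma> where sv: "valid_strategy \<sigma>" and sL: "(1 - Ph Lo) * fst \<sigma> + Ph Lo * snd \<sigma> < \<tau>"
      and sH: "\<tau> < (1 - Ph Hi) * fst \<sigma> + Ph Hi * snd \<sigma>"
    using exists_sigma[of "Ph Lo" "Ph Hi" \<tau>] signal tau by auto
  define gL where "gL = voteA_prob Ph Lo \<sigma>"
  define gH where "gH = voteA_prob Ph Hi \<sigma>"
  have g01: "0 \<le> gL" "gL \<le> 1" "0 \<le> gH" "gH \<le> 1"
    using voteA_01[OF sv] signal by (auto simp: gL_def gH_def)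
  have gLt: "gL < \<tau>" "\<tau> < gH" using sL sH by (auto simp: gL_def gH_def voteA_prob_def)
  define \<delta>H where "\<delta>H = \<alpha>F + \<alpha>C * gH - \<mu>"
  define \<delta>L where "\<delta>L = \<mu> - \<alpha>F - \<alpha>C * gL"
  have dH: "\<delta>H > 0"
  proof -
    have "\<alpha>C * \<tau> < \<alpha>C * gH" using gLt aC by simp
    moreover have "\<alpha>C * \<tau> = \<mu> - \<alpha>F" using aC by (simp add: \<tau>_def)
    ultimately show ?thesis by (simp add: \<delta>H_def)
  qed
  have dL: "\<delta>L > 0"
  proof -
    have "\<alpha>C * gL < \<alpha>C * \<tau>" using gLt aC by simp
    moreover have "\<alpha>C * \<tau> = \<mu> - \<alpha>F" using aC by (simp add: \<tau>_def)
    ultimately show ?thesis by (simp add: \<delta>L_def)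
  qed
  define pr where "pr = min (prior Hi) (prior Lo)"
  have pr: "0 < pr" "pr \<le> prior Hi" "pr \<le> prior Lo" "prior Hi \<le> 1" "prior Lo \<le> 1"
    using prior by (auto simp: pr_def)
  define \<kappa> where "\<kappa> = pr * \<eta> / (4 * (real B + 1))"
  have k0: "\<kappa> > 0" using pr eta by (simp add: \<kappa>_def)
  define X where "X = 1 + 2 / \<delta>H + 2 / \<delta>L + 1 / (\<kappa> * \<delta>H^2) + 1 / (\<kappa> * \<delta>L^2)"
  define N0 where "N0 = nat \<lceil>X\<rceil>"
  define A where "A = {N. N \<ge> 1 \<and> (\<eta> \<le> 1 - winA \<mu> Ph N (\<Sigma> N) Hi \<or> \<eta> \<le> winA \<mu> Ph N (\<Sigma> N) Lo)}"
  have "{N \<in> A. N0 \<le> N} \<subseteq> {N. N \<ge> 1 \<and> \<not> strong_BNE prior Ph \<mu> N (v N) (\<Sigma> N) (pr * \<eta> / 2)}"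
  proof
    fix N assume "N \<in> {N \<in> A. N0 \<le> N}"
    then have N1: "N \<ge> 1" and fail: "\<eta> \<le> 1 - winA \<mu> Ph N (\<Sigma> N) Hi \<or> \<eta> \<le> winA \<mu> Ph N (\<Sigma> N) Lo"
      and NN0: "N0 \<le> N" by (auto simp: A_def)
    have NX: "X \<le> real N" using NN0 unfolding N0_def by linarith
    have Xp: "0 \<le> 2 / \<delta>H" "0 \<le> 2 / \<delta>L" "0 \<le> 1 / (\<kappa> * \<delta>H^2)" "0 \<le> 1 / (\<kappa> * \<delta>L^2)"
      using dH dL k0 by auto
    have NH: "2 / \<delta>H \<le> real N" and NL: "2 / \<delta>L \<le> real N"
      and NkH: "1 / (\<kappa> * \<delta>H^2) \<le> real N" and NkL: "1 / (\<kappa> * \<delta>L^2) \<le> real N"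
      using NX Xp unfolding X_def by linarith+
    have Np: "real N > 0" using N1 by simp
    have regN: "regular N (v N) (\<Sigma> N)" using reg N1 by auto
    have valN: "\<forall>n<N. valid_strategy (\<Sigma> N n)" using regN by (simp add: regular_def)
    have typesN: "\<forall>n<N. friendly (v N n) \<or> unfriendly (v N n) \<or> contingent (v N n)" using types by auto
    define \<Sigma>' where "\<Sigma>' n = (if contingent (v N n) then \<sigma> else \<Sigma> N n)" for n
    define D where "D = {n. n < N \<and> contingent (v N n)}"
    define F where "F = real (card {n. n < N \<and> friendly (v N n)})"
    define U where "U = real (card {n. n < N \<and> unfriendly (v N n)})"
    define C where "C = real (card D)"
    have part: "F + U + C = real N"
      using card_partition[OF typesN] unfolding F_def U_def C_def D_def by (metis of_nat_add)
    have Fb: "F \<le> \<alpha>F * real N" "\<alpha>F * real N - 1 \<le> F"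
      using floor_bounds[of "\<alpha>F * real N"] alpha countF by (auto simp: F_def)
    have Ub: "U \<le> \<alpha>U * real N" "\<alpha>U * real N - 1 \<le> U"
      using floor_bounds[of "\<alpha>U * real N"] alpha countU by (auto simp: U_def)
    have Cpos: "C > 0"
    proof -
      have "\<alpha>C * real N > 0" using aC Np by simp
      moreover have "C = real N - F - U" using part by simp
      moreover have "\<alpha>C * real N = real N - \<alpha>F * real N - \<alpha>U * real N"
      proof -
        have "\<alpha>C = 1 - \<alpha>F - \<alpha>U" using alpha by linarith
        then have "\<alpha>C * real N = (1 - \<alpha>F - \<alpha>U) * real N" by simp
        also have "\<dots> = real N - \<alpha>F * real N - \<alpha>U * real N" by (simp add: algebra_simps)
        finally show ?thesis .
      qed
      ultimately show ?thesis using Fb Ub by linarith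
    qed
    then have Dne: "D \<noteq> {}" by (auto simp: C_def)
    have val': "\<forall>n<N. valid_strategy (\<Sigma>' n)" using valN sv by (simp add: \<Sigma>'_def)
    have msH: "msum (\<lambda>n. voteA_prob Ph Hi (\<Sigma>' n)) {..<N} = F + gH * C"
      using msum_dev[OF regN typesN, of Ph Hi \<sigma>] by (simp add: \<Sigma>'_def[abs_def] F_def gH_def C_def D_def)
    have msL: "msum (\<lambda>n. voteA_prob Ph Lo (\<Sigma>' n)) {..<N} = F + gL * C"
      using msum_dev[OF regN typesN, of Ph Lo \<sigma>] by (simp add: \<Sigma>'_def[abs_def] F_def gL_def C_def D_def)
    have cH: "\<delta>H / 2 \<le> msum (\<lambda>n. voteA_prob Ph Hi (\<Sigma>' n)) {..<N} / real N - \<mu>"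
    proof -
      have Ceq: "C = real N - F - U" using part by linarith
      have "F + gH * C = F * (1 - gH) + gH * (real N - U)" unfolding Ceq by (simp add: algebra_simps)
      also have "\<dots> \<ge> (\<alpha>F * real N - 1) * (1 - gH) + gH * (real N - \<alpha>U * real N)"
        using Fb Ub g01 by (intro add_mono mult_right_mono mult_left_mono) auto
      finally have "F + gH * C \<ge> real N * (\<alpha>F + (1 - \<alpha>F - \<alpha>U) * gH) - (1 - gH)"
        by (simp add: algebra_simps)
      moreover have "1 - \<alpha>F - \<alpha>U = \<alpha>C" using alpha by simp
      ultimately have "F + gH * C \<ge> real N * (\<mu> + \<delta>H) - 1" using g01 by (simp add: \<delta>H_def)
      moreover have "real N * \<delta>H \<ge> 2" using NH dH by (simp add: field_simps)
      ultimately have "F + gH * C \<ge> real N * (\<mu> + \<delta>H / 2)" by (simp add: algebra_simps)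
      then show ?thesis unfolding msH using Np by (simp add: field_simps)
    qed
    have cL: "\<delta>L / 2 \<le> \<mu> - msum (\<lambda>n. voteA_prob Ph Lo (\<Sigma>' n)) {..<N} / real N"
    proof -
      have Ceq: "C = real N - F - U" using part by linarith
      have "F + gL * C = F * (1 - gL) + gL * (real N - U)" unfolding Ceq by (simp add: algebra_simps)
      also have "\<dots> \<le> (\<alpha>F * real N) * (1 - gL) + gL * (real N - (\<alpha>U * real N - 1))"
        using Fb Ub g01 by (intro add_mono mult_right_mono mult_left_mono) auto
      finally have "F + gL * C \<le> real N * (\<alpha>F + (1 - \<alpha>F - \<alpha>U) * gL) + gL"
        by (simp add: algebra_simps)
      moreover have "1 - \<alpha>F - \<alpha>U = \<alpha>C" using alpha by simp
      ultimately have "F + gL * C \<le> real N * (\<mu> - \<delta>L) + 1" using g01 by (simp add: \<delta>L_def)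
      moreover have "real N * \<delta>L \<ge> 2" using NL dL by (simp add: field_simps)
      ultimately have "F + gL * C \<le> real N * (\<mu> - \<delta>L / 2)" by (simp add: algebra_simps)
      then show ?thesis unfolding msL using Np by (simp add: field_simps)
    qed
    have hd: "\<delta>H / 2 > 0" "\<delta>L / 2 > 0" using dH dL by auto
    have bH: "1 - winA \<mu> Ph N \<Sigma>' Hi \<le> \<kappa>"
    proof -
      have "1 - winA \<mu> Ph N \<Sigma>' Hi = winR \<mu> Ph N \<Sigma>' Hi" by (simp add: winR_eq)
      also have "\<dots> \<le> 1 / (4 * real N * (\<delta>H / 2)^2)"
        unfolding winR_EE using cheb_H[OF N1 pr01_vote[OF val'] hd(1) cH] signal by auto
      also have "\<dots> = 1 / (real N * \<delta>H^2)" by (simp add: power2_eq_square)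
      also have "\<dots> \<le> \<kappa>" using NkH k0 dH Np by (simp add: field_simps)
      finally show ?thesis .
    qed
    have bL: "winA \<mu> Ph N \<Sigma>' Lo \<le> \<kappa>"
    proof -
      have "winA \<mu> Ph N \<Sigma>' Lo \<le> 1 / (4 * real N * (\<delta>L / 2)^2)"
        unfolding winA_EE using cheb_L[OF N1 pr01_vote[OF val'] hd(2) cL] signal by auto
      also have "\<dots> = 1 / (real N * \<delta>L^2)" by (simp add: power2_eq_square)
      also have "\<dots> \<le> \<kappa>" using NkL k0 dL Np by (simp add: field_simps)
      finally show ?thesis .
    qed
    have A01: "0 \<le> winA \<mu> Ph N (\<Sigma> N) w \<and> winA \<mu> Ph N (\<Sigma> N) w \<le> 1"
      "0 \<le> winA \<mu> Ph N \<Sigma>' w \<and> winA \<mu> Ph N \<Sigma>' w \<le> 1" for w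
      using winA_01[OF valN] winA_01[OF val'] signal by auto
    have gainD: "exp_util prior Ph \<mu> N \<Sigma>' (v N n) > exp_util prior Ph \<mu> N (\<Sigma> N) (v N n) + pr * \<eta> / 2"
      if n: "n \<in> D" for n
    proof -
      have c: "contingent (v N n)" using n by (simp add: D_def)
      have ub: "v N n w z \<le> B" for w z using util_bound by auto
      have "pr * \<eta> / 2 < (real (v N n Hi Acc) - real (v N n Hi Rej)) * (prior Hi * (winA \<mu> Ph N \<Sigma>' Hi - winA \<mu> Ph N (\<Sigma> N) Hi))
          + (real (v N n Lo Acc) - real (v N n Lo Rej)) * (prior Lo * (winA \<mu> Ph N \<Sigma>' Lo - winA \<mu> Ph N (\<Sigma> N) Lo))"
      proof (rule gain_lower[where Bb = "real B" and \<kappa> = \<kappa>])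
        show "1 \<le> real (v N n Hi Acc) - real (v N n Hi Rej)" using c by (simp add: contingent_def)
        show "real (v N n Hi Acc) - real (v N n Hi Rej) \<le> real B" using ub[of Hi Acc] by linarith
        show "- real B \<le> real (v N n Lo Acc) - real (v N n Lo Rej)" using ub[of Lo Rej] by linarith
        show "real (v N n Lo Acc) - real (v N n Lo Rej) \<le> -1" using c by (simp add: contingent_def)
      qed (use pr A01 bH bL eta fail in \<open>auto simp: \<kappa>_def\<close>)
      then show ?thesis using gain_eq[of prior Ph \<mu> N \<Sigma>' "v N n" "\<Sigma> N"] by linarith
    qed
    have "\<not> strong_BNE prior Ph \<mu> N (v N) (\<Sigma> N) (pr * \<eta> / 2)"
      unfolding strong_BNE_def
    proof (intro notI, elim notE, intro exI conjI)
      show "D \<subseteq> {..<N}" by (auto simp: D_def)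
      show "\<forall>n<N. valid_strategy (\<Sigma>' n)" by (rule val')
      show "\<forall>n<N. n \<notin> D \<longrightarrow> \<Sigma>' n = \<Sigma> N n" by (auto simp: D_def \<Sigma>'_def)
      show "\<forall>n\<in>D. exp_util prior Ph \<mu> N (\<Sigma> N) (v N n) \<le> exp_util prior Ph \<mu> N \<Sigma>' (v N n)"
        using gainD pr eta by (smt (verit) mult_pos_pos divide_pos_pos)
      show "\<exists>n\<in>D. exp_util prior Ph \<mu> N (\<Sigma> N) (v N n) + pr * \<eta> / 2 < exp_util prior Ph \<mu> N \<Sigma>' (v N n)"
        using gainD Dne by blast
    qed
    then show "N \<in> {N. N \<ge> 1 \<and> \<not> strong_BNE prior Ph \<mu> N (v N) (\<Sigma> N) (pr * \<eta> / 2)}" using N1 by simp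
  qed
  moreover have "infinite {N \<in> A. N0 \<le> N}" by (rule infinite_tail) (use inf in \<open>simp add: A_def\<close>)
  ultimately have "infinite {N. N \<ge> 1 \<and> \<not> strong_BNE prior Ph \<mu> N (v N) (\<Sigma> N) (pr * \<eta> / 2)}"
    using infinite_super by blast
  moreover have "pr * \<eta> / 2 > 0" using pr eta by simp
  ultimately show ?thesis by blast
qed



lemma tail_gen:
  assumes N: "N \<ge> 1" and pr: "pr01 p {..<N}" and s: "s * s = 1" and c: "c > 0"
    and PZ: "\<And>S. S \<subseteq> {..<N} \<Longrightarrow> P S \<Longrightarrow> c * sqrt (real N) \<le> s * (real (card S) - msum p {..<N})"
  shows "EE p {..<N} (\<lambda>S. of_bool (P S)) \<le> 1 - min (1/2) (c^2)"
proof -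
  define q where "q = EE p {..<N} (\<lambda>S. of_bool (P S))"
  define r where "r = sqrt (real N)"
  have r: "r > 0" "r^2 = real N" using N by (auto simp: r_def)
  define Z where "Z S = s * (real (card (S::nat set)) - msum p {..<N})" for S
  have EZ: "EE p {..<N} Z = 0"
    using EE_centered[of "{..<N}" p] EE_cmult[of p "{..<N}" s] by (simp add: Z_def[abs_def] msum_def)
  have s2: "s^2 = 1" using s by (simp add: power2_eq_square)
  have EZ2: "EE p {..<N} (\<lambda>S. (Z S)^2) \<le> real N / 4"
  proof -
    have "EE p {..<N} (\<lambda>S. (Z S)^2) = vsum p {..<N}"
      unfolding Z_def power_mult_distrib s2 using EE_var[of "{..<N}" p] by (simp add: vsum_def msum_def)
    then show ?thesis using vsum_le[of p "{..<N}"] by simp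
  qed
  have T: "(c * r) * q \<le> (real N / 4) / (2 * (r / (2 * c))) + (r / (2 * c)) / 2 * (1 - q)"
    unfolding q_def
    by (rule tail_lemma[OF _ pr EZ EZ2]) (use c r PZ in \<open>auto simp: Z_def r_def\<close>)
  have e1: "(real N / 4) / (2 * (r / (2 * c))) = r * (c / 4)"
    using r c by (simp add: field_simps power2_eq_square)
  have e2: "(r / (2 * c)) / 2 * (1 - q) = r * ((1 - q) / (4 * c))" using c by simp
  have e3: "(c * r) * q = r * (c * q)" by simp
  have "r * (c * q) \<le> r * (c / 4) + r * ((1 - q) / (4 * c))" using T unfolding e1 e2 e3 .
  then have "r * (c * q) \<le> r * (c / 4 + (1 - q) / (4 * c))" by (simp add: distrib_left)
  then have cq: "c * q \<le> c / 4 + (1 - q) / (4 * c)" using r(1) by simp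
  show ?thesis
  proof (cases "q \<ge> 1/2")
    case True
    then have "c / 2 \<le> c * q" using c by simp
    with cq have "c / 4 \<le> (1 - q) / (4 * c)" by linarith
    then have "c^2 \<le> 1 - q" using c by (simp add: field_simps power2_eq_square)
    then show ?thesis unfolding q_def[symmetric] by linarith
  next
    case False then show ?thesis unfolding q_def[symmetric] by linarith
  qed
qed

lemma infinite_freq: "(\<And>k. \<exists>N>k. P N) \<Longrightarrow> infinite {N::nat. P N}"
  unfolding infinite_nat_iff_unbounded by auto



lemma scale_lt:
  assumes "real N > 0" "a / real N < b / sqrt (real N)"
  shows "a < b * sqrt (real N)"
proof -
  have sN: "sqrt (real N) > 0" "sqrt (real N) * sqrt (real N) = real N" using assms(1) by auto
  have "a = (a / real N) * real N" using assms(1) by simp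
  also have "\<dots> < (b / sqrt (real N)) * real N" using assms by (intro mult_strict_right_mono) auto
  also have "\<dots> = b * sqrt (real N)" using sN by (simp add: field_simps)
  finally show ?thesis .
qed

lemma excess_lt:
  assumes N: "N \<ge> 1" and lt: "sqrt (real N) * excess Ph \<mu> N \<Sigma> < b"
  shows "msum (\<lambda>n. voteA_prob Ph Hi (\<Sigma> n)) {..<N} - \<mu> * real N < b * sqrt (real N)
       \<or> \<mu> * real N - msum (\<lambda>n. voteA_prob Ph Lo (\<Sigma> n)) {..<N} < b * sqrt (real N)"
proof -
  have Np: "real N > 0" using N by simp
  have sN: "sqrt (real N) > 0" using Np by simp
  have "excess Ph \<mu> N \<Sigma> < b / sqrt (real N)" using lt sN by (simp add: field_simps)
  then have "msum (\<lambda>n. voteA_prob Ph Hi (\<Sigma> n)) {..<N} / real N - \<mu> < b / sqrt (real N)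
       \<or> \<mu> - msum (\<lambda>n. voteA_prob Ph Lo (\<Sigma> n)) {..<N} / real N < b / sqrt (real N)"
    unfolding excess_parts[OF N] by linarith
  then show ?thesis
  proof
    assume "msum (\<lambda>n. voteA_prob Ph Hi (\<Sigma> n)) {..<N} / real N - \<mu> < b / sqrt (real N)"
    then have "(msum (\<lambda>n. voteA_prob Ph Hi (\<Sigma> n)) {..<N} - \<mu> * real N) / real N < b / sqrt (real N)"
      using Np by (simp add: field_simps)
    then show ?thesis using scale_lt[OF Np] by blast
  next
    assume "\<mu> - msum (\<lambda>n. voteA_prob Ph Lo (\<Sigma> n)) {..<N} / real N < b / sqrt (real N)"
    then have "(\<mu> * real N - msum (\<lambda>n. voteA_prob Ph Lo (\<Sigma> n)) {..<N}) / real N < b / sqrt (real N)"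
      using Np by (simp add: field_simps)
    then show ?thesis using scale_lt[OF Np] by blast
  qed
qed

lemma liminf_freq:
  assumes "liminf (\<lambda>N. ereal (f N)) < ereal r"
  shows "infinite {N. f N < r}"
proof (rule infinite_freq)
  fix k
  obtain N where "N > k" "ereal (f N) < ereal r" using liminf_upper_bound[OF assms] by blast
  then show "\<exists>N>k. f N < r" by auto
qed

theorem corollary1:
  fixes prior Ph :: "wstate \<Rightarrow> real" and \<mu> \<alpha>F \<alpha>U \<alpha>C :: real and B :: nat
    and v :: "nat \<Rightarrow> nat \<Rightarrow> wstate \<Rightarrow> outcome \<Rightarrow> nat"
    and \<Sigma> :: "nat \<Rightarrow> nat \<Rightarrow> strategy"
  assumes prior: "prior Lo > 0" "prior Hi > 0" "prior Lo + prior Hi = 1"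
    and signal: "\<forall>w. 0 \<le> Ph w \<and> Ph w \<le> 1" "Ph Hi > Ph Lo"
    and mu: "0 < \<mu>" "\<mu> < 1"
    and alpha: "\<alpha>F \<ge> 0" "\<alpha>U \<ge> 0" "\<alpha>C \<ge> 0" "\<alpha>F + \<alpha>U + \<alpha>C = 1"
      "\<alpha>F < \<mu>" "\<alpha>U < 1 - \<mu>"
    and util_bound: "\<forall>N n w x. v N n w x \<le> B"
    and util_mono: "\<forall>N n. n < N \<longrightarrow> v N n Hi Acc > v N n Lo Acc \<and> v N n Hi Rej < v N n Lo Rej"
    and types: "\<forall>N n. n < N \<longrightarrow> friendly (v N n) \<or> unfriendly (v N n) \<or> contingent (v N n)"
    and countF: "\<forall>N. card {n. n < N \<and> friendly (v N n)} = nat \<lfloor>\<alpha>F * real N\<rfloor>"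
    and countU: "\<forall>N. card {n. n < N \<and> unfriendly (v N n)} = nat \<lfloor>\<alpha>U * real N\<rfloor>"
    and reg: "\<forall>N\<ge>1. regular N (v N) (\<Sigma> N)"
  shows
    "(liminf (\<lambda>N. ereal (sqrt (real N) * excess Ph \<mu> N (\<Sigma> N))) = \<infinity> \<longrightarrow>
        (\<exists>\<epsilon> :: nat \<Rightarrow> real. \<epsilon> \<longlonglongrightarrow> 0 \<and>
           (\<forall>N\<ge>1. strong_BNE prior Ph \<mu> N (v N) (\<Sigma> N) (\<epsilon> N))))
     \<and> (liminf (\<lambda>N. ereal (sqrt (real N) * excess Ph \<mu> N (\<Sigma> N))) < 0 \<longrightarrow>
        (\<exists>\<epsilon>>0. infinite {N. N \<ge> 1 \<and> \<not> strong_BNE prior Ph \<mu> N (v N) (\<Sigma> N) \<epsilon>}))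
     \<and> (0 \<le> liminf (\<lambda>N. ereal (sqrt (real N) * excess Ph \<mu> N (\<Sigma> N))) \<and>
        liminf (\<lambda>N. ereal (sqrt (real N) * excess Ph \<mu> N (\<Sigma> N))) < \<infinity> \<and>
        (\<exists>\<psi>>0. \<forall>N\<ge>1. \<forall>w. var_votes Ph N (\<Sigma> N) w \<ge> \<psi> * real N) \<longrightarrow>
        (\<exists>\<epsilon>>0. infinite {N. N \<ge> 1 \<and> \<not> strong_BNE prior Ph \<mu> N (v N) (\<Sigma> N) \<epsilon>}))"
proof -
  have val: "\<forall>N\<ge>1. \<forall>n<N. valid_strategy (\<Sigma> N n)" using reg by (auto simp: regular_def)
  have prior1: "prior Hi \<le> 1" "prior Lo \<le> 1" using prior by auto
  note dev = deviation[OF prior signal mu alpha util_bound types countF countU reg]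
  have partI: "liminf (\<lambda>N. ereal (sqrt (real N) * excess Ph \<mu> N (\<Sigma> N))) = \<infinity> \<longrightarrow>
        (\<exists>\<epsilon> :: nat \<Rightarrow> real. \<epsilon> \<longlonglongrightarrow> 0 \<and>
           (\<forall>N\<ge>1. strong_BNE prior Ph \<mu> N (v N) (\<Sigma> N) (\<epsilon> N)))"
  proof
    assume lim: "liminf (\<lambda>N. ereal (sqrt (real N) * excess Ph \<mu> N (\<Sigma> N))) = \<infinity>"
    define \<epsilon> where "\<epsilon> N = (real B + real B^2) * (prior Hi * (1 - winA \<mu> Ph N (\<Sigma> N) Hi) + prior Lo * winA \<mu> Ph N (\<Sigma> N) Lo)" for N
    show "\<exists>\<epsilon> :: nat \<Rightarrow> real. \<epsilon> \<longlonglongrightarrow> 0 \<and> (\<forall>N\<ge>1. strong_BNE prior Ph \<mu> N (v N) (\<Sigma> N) (\<epsilon> N))"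
    proof (intro exI[of _ \<epsilon>] conjI allI impI)
      show "\<epsilon> \<longlonglongrightarrow> 0" unfolding \<epsilon>_def
        by (rule part_i_limit[OF prior signal(1) val lim]) simp
      fix N :: nat assume N: "N \<ge> 1"
      show "strong_BNE prior Ph \<mu> N (v N) (\<Sigma> N) (\<epsilon> N)" unfolding \<epsilon>_def
        by (rule part_i_bne[OF prior(1,2) signal(1)]) (use util_bound types reg N in auto)
    qed
  qed
  have partII: "liminf (\<lambda>N. ereal (sqrt (real N) * excess Ph \<mu> N (\<Sigma> N))) < 0 \<longrightarrow>
        (\<exists>\<epsilon>>0. infinite {N. N \<ge> 1 \<and> \<not> strong_BNE prior Ph \<mu> N (v N) (\<Sigma> N) \<epsilon>})"
  proof
    assume lim: "liminf (\<lambda>N. ereal (sqrt (real N) * excess Ph \<mu> N (\<Sigma> N))) < 0"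
    obtain r where r: "liminf (\<lambda>N. ereal (sqrt (real N) * excess Ph \<mu> N (\<Sigma> N))) < ereal r" "ereal r < 0"
      using ereal_dense2[OF lim] by (auto simp: zero_ereal_def)
    define c where "c = - r"
    have c: "c > 0" using r(2) by (simp add: c_def)
    define \<eta> where "\<eta> = min (1/2) (c^2)"
    have eta: "\<eta> > 0" using c by (simp add: \<eta>_def)
    have infA: "infinite {N. sqrt (real N) * excess Ph \<mu> N (\<Sigma> N) < r}" by (rule liminf_freq[OF r(1)])
    have "{N \<in> {N. sqrt (real N) * excess Ph \<mu> N (\<Sigma> N) < r}. 1 \<le> N} \<subseteq>
          {N. N \<ge> 1 \<and> (\<eta> \<le> 1 - winA \<mu> Ph N (\<Sigma> N) Hi \<or> \<eta> \<le> winA \<mu> Ph N (\<Sigma> N) Lo)}"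
    proof
      fix N assume "N \<in> {N \<in> {N. sqrt (real N) * excess Ph \<mu> N (\<Sigma> N) < r}. 1 \<le> N}"
      then have N: "N \<ge> 1" and lt: "sqrt (real N) * excess Ph \<mu> N (\<Sigma> N) < - c" by (auto simp: c_def)
      have valN: "\<forall>n<N. valid_strategy (\<Sigma> N n)" using val N by auto
      have cs: "- c * sqrt (real N) = - (c * sqrt (real N))" by simp
      from excess_lt[OF N lt] have "\<eta> \<le> 1 - winA \<mu> Ph N (\<Sigma> N) Hi \<or> \<eta> \<le> winA \<mu> Ph N (\<Sigma> N) Lo"
      proof
        assume h: "msum (\<lambda>n. voteA_prob Ph Hi (\<Sigma> N n)) {..<N} - \<mu> * real N < - c * sqrt (real N)"
        have "winA \<mu> Ph N (\<Sigma> N) Hi \<le> 1 - \<eta>" unfolding winA_EE \<eta>_def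
          by (rule tail_gen[where s="1::real", OF N pr01_vote[OF valN] _ c]) (use h signal in auto)
        then show ?thesis by simp
      next
        assume h: "\<mu> * real N - msum (\<lambda>n. voteA_prob Ph Lo (\<Sigma> N n)) {..<N} < - c * sqrt (real N)"
        have "winR \<mu> Ph N (\<Sigma> N) Lo \<le> 1 - \<eta>" unfolding winR_EE \<eta>_def
          by (rule tail_gen[where s="-1::real", OF N pr01_vote[OF valN] _ c]) (use h signal in auto)
        then show ?thesis by (simp add: winR_eq)
      qed
      then show "N \<in> {N. N \<ge> 1 \<and> (\<eta> \<le> 1 - winA \<mu> Ph N (\<Sigma> N) Hi \<or> \<eta> \<le> winA \<mu> Ph N (\<Sigma> N) Lo)}"
        using N by simp
    qed
    moreover have "infinite {N \<in> {N. sqrt (real N) * excess Ph \<mu> N (\<Sigma> N) < r}. 1 \<le> N}"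
      by (rule infinite_tail[OF infA])
    ultimately have "infinite {N. N \<ge> 1 \<and> (\<eta> \<le> 1 - winA \<mu> Ph N (\<Sigma> N) Hi \<or> \<eta> \<le> winA \<mu> Ph N (\<Sigma> N) Lo)}"
      using infinite_super by blast
    then show "\<exists>\<epsilon>>0. infinite {N. N \<ge> 1 \<and> \<not> strong_BNE prior Ph \<mu> N (v N) (\<Sigma> N) \<epsilon>}"
      by (rule dev[OF eta])
  qed
  have partIII: "0 \<le> liminf (\<lambda>N. ereal (sqrt (real N) * excess Ph \<mu> N (\<Sigma> N))) \<and>
        liminf (\<lambda>N. ereal (sqrt (real N) * excess Ph \<mu> N (\<Sigma> N))) < \<infinity> \<and>
        (\<exists>\<psi>>0. \<forall>N\<ge>1. \<forall>w. var_votes Ph N (\<Sigma> N) w \<ge> \<psi> * real N) \<longrightarrow>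
        (\<exists>\<epsilon>>0. infinite {N. N \<ge> 1 \<and> \<not> strong_BNE prior Ph \<mu> N (v N) (\<Sigma> N) \<epsilon>})"
  proof (intro impI, elim conjE exE)
    fix \<psi> :: real
    assume lim: "liminf (\<lambda>N. ereal (sqrt (real N) * excess Ph \<mu> N (\<Sigma> N))) < \<infinity>"
      and psi: "\<psi> > 0" and var: "\<forall>N\<ge>1. \<forall>w. var_votes Ph N (\<Sigma> N) w \<ge> \<psi> * real N"
    obtain r where r: "liminf (\<lambda>N. ereal (sqrt (real N) * excess Ph \<mu> N (\<Sigma> N))) < ereal r"
      using ereal_dense2[OF lim] by auto
    define M where "M = max r 1"
    have M: "M > 0" "r \<le> M" by (auto simp: M_def)
    have rM: "liminf (\<lambda>N. ereal (sqrt (real N) * excess Ph \<mu> N (\<Sigma> N))) < ereal M"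
      using r M(2) by (meson ereal_less_eq(3) order_less_le_trans)
    define K where "K = M / sqrt \<psi>"
    have K: "K > 0" using M psi by (simp add: K_def)
    obtain V0 \<eta> where eta: "\<eta> > 0" and AC: "\<forall>p I s. finite I \<longrightarrow> pr01 p I \<longrightarrow> vsum p I \<ge> V0 \<longrightarrow> s * s = 1 \<longrightarrow>
     EE p I (\<lambda>S. of_bool (K * sqrt (vsum p I) \<le> s * (real (card S) - msum p I))) \<ge> \<eta>"
      using anticonc[OF K] by blast
    define N0 where "N0 = max 1 (nat \<lceil>V0 / \<psi>\<rceil>)"
    have infA: "infinite {N. sqrt (real N) * excess Ph \<mu> N (\<Sigma> N) < M}" by (rule liminf_freq[OF rM])
    have "{N \<in> {N. sqrt (real N) * excess Ph \<mu> N (\<Sigma> N) < M}. N0 \<le> N} \<subseteq>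
          {N. N \<ge> 1 \<and> (\<eta> \<le> 1 - winA \<mu> Ph N (\<Sigma> N) Hi \<or> \<eta> \<le> winA \<mu> Ph N (\<Sigma> N) Lo)}"
    proof
      fix N assume "N \<in> {N \<in> {N. sqrt (real N) * excess Ph \<mu> N (\<Sigma> N) < M}. N0 \<le> N}"
      then have N0N: "N0 \<le> N" and lt: "sqrt (real N) * excess Ph \<mu> N (\<Sigma> N) < M" by auto
      have N: "N \<ge> 1" using N0N by (simp add: N0_def)
      have NV: "V0 / \<psi> \<le> real N" using N0N unfolding N0_def by linarith
      have valN: "\<forall>n<N. valid_strategy (\<Sigma> N n)" using val N by auto
      have Vw: "vsum (\<lambda>n. voteA_prob Ph w (\<Sigma> N n)) {..<N} \<ge> \<psi> * real N" for w
        using var N by (simp add: var_votes_eq)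
      have V0w: "vsum (\<lambda>n. voteA_prob Ph w (\<Sigma> N n)) {..<N} \<ge> V0" for w
      proof -
        have "V0 \<le> \<psi> * real N" using NV psi by (simp add: field_simps)
        then show ?thesis using Vw[of w] by linarith
      qed
      have KV: "M * sqrt (real N) \<le> K * sqrt (vsum (\<lambda>n. voteA_prob Ph w (\<Sigma> N n)) {..<N})" for w
      proof -
        have "sqrt (\<psi> * real N) \<le> sqrt (vsum (\<lambda>n. voteA_prob Ph w (\<Sigma> N n)) {..<N})"
          using Vw[of w] by simp
        then have "K * sqrt (\<psi> * real N) \<le> K * sqrt (vsum (\<lambda>n. voteA_prob Ph w (\<Sigma> N n)) {..<N})"
          using K by simp
        moreover have "K * sqrt (\<psi> * real N) = M * sqrt (real N)"
          using psi by (simp add: K_def real_sqrt_mult)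
        ultimately show ?thesis by simp
      qed
      have ACw: "\<eta> \<le> EE (\<lambda>n. voteA_prob Ph w (\<Sigma> N n)) {..<N}
          (\<lambda>S. of_bool (K * sqrt (vsum (\<lambda>n. voteA_prob Ph w (\<Sigma> N n)) {..<N})
             \<le> s * (real (card S) - msum (\<lambda>n. voteA_prob Ph w (\<Sigma> N n)) {..<N})))"
        if "s * s = 1" for s w
        using AC pr01_vote[OF valN] signal V0w that by auto
      from excess_lt[OF N lt] have "\<eta> \<le> 1 - winA \<mu> Ph N (\<Sigma> N) Hi \<or> \<eta> \<le> winA \<mu> Ph N (\<Sigma> N) Lo"
      proof
        assume h: "msum (\<lambda>n. voteA_prob Ph Hi (\<Sigma> N n)) {..<N} - \<mu> * real N < M * sqrt (real N)"
        have "\<eta> \<le> winR \<mu> Ph N (\<Sigma> N) Hi"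
          unfolding winR_EE
        proof (rule order_trans[OF ACw[of "-1" Hi]], simp, intro EE_mono[OF pr01_vote[OF valN]] of_bool_mono)
          show "0 \<le> Ph Hi" "Ph Hi \<le> 1" using signal by auto
          fix S assume "K * sqrt (vsum (\<lambda>n. voteA_prob Ph Hi (\<Sigma> N n)) {..<N})
             \<le> - 1 * (real (card S) - msum (\<lambda>n. voteA_prob Ph Hi (\<Sigma> N n)) {..<N})"
          then show "real (card S) < \<mu> * real N" using h KV[of Hi] by (simp add: algebra_simps)
        qed
        then show ?thesis by (simp add: winR_eq)
      next
        assume h: "\<mu> * real N - msum (\<lambda>n. voteA_prob Ph Lo (\<Sigma> N n)) {..<N} < M * sqrt (real N)"
        have "\<eta> \<le> winA \<mu> Ph N (\<Sigma> N) Lo"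
          unfolding winA_EE
        proof (rule order_trans[OF ACw[of 1 Lo]], simp, intro EE_mono[OF pr01_vote[OF valN]] of_bool_mono)
          show "0 \<le> Ph Lo" "Ph Lo \<le> 1" using signal by auto
          fix S assume "K * sqrt (vsum (\<lambda>n. voteA_prob Ph Lo (\<Sigma> N n)) {..<N})
             \<le> 1 * (real (card S) - msum (\<lambda>n. voteA_prob Ph Lo (\<Sigma> N n)) {..<N})"
          then show "\<mu> * real N \<le> real (card S)" using h KV[of Lo] by (simp add: algebra_simps)
        qed
        then show ?thesis by simp
      qed
      then show "N \<in> {N. N \<ge> 1 \<and> (\<eta> \<le> 1 - winA \<mu> Ph N (\<Sigma> N) Hi \<or> \<eta> \<le> winA \<mu> Ph N (\<Sigma> N) Lo)}"
        using N by simp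
    qed
    moreover have "infinite {N \<in> {N. sqrt (real N) * excess Ph \<mu> N (\<Sigma> N) < M}. N0 \<le> N}"
      by (rule infinite_tail[OF infA])
    ultimately have "infinite {N. N \<ge> 1 \<and> (\<eta> \<le> 1 - winA \<mu> Ph N (\<Sigma> N) Hi \<or> \<eta> \<le> winA \<mu> Ph N (\<Sigma> N) Lo)}"
      using infinite_super by blast
    then show "\<exists>\<epsilon>>0. infinite {N. N \<ge> 1 \<and> \<not> strong_BNE prior Ph \<mu> N (v N) (\<Sigma> N) \<epsilon>}"
      by (rule dev[OF eta])
  qed
  show ?thesis using partI partII partIII by blast
qed



end
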